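(* Let $A$ be a Riesz-spectral operator on a Hilbert space $X$ with simple eigenvalues $(\lambda_n)_{n\in\mathbb N}$, only finitely many of which lie in $\mathbb C_0=\{\mathrm{Re}\,\lambda>0\}$. Let $B\in\mathcal L(\mathbb C,X)$ and $F\in\mathcal L(X,\mathbb C)$ be such that $A+BF$ generates a uniformly bounded $C_0$-semigroup on $X$. If $\tau>0$ satisfies (i) $\tau(\lambda_n-\lambda_m)\ne2\ell\pi i$ for all $\ell\in\mathbb Z\setminus\{0\}$ and all $n,m$ with $\lambda_n,\lambda_m\in\mathbb C_0$, and (ii) $FR(z,T(\tau))S(\tau)\ne1$ for all $z\in\rho(T(\tau))$ with $|z|>1$, then $\{z:|z|>1\}\subset\rho(\Delta(\tau))$.
   Context: A Riesz-spectral operator: closed operator with simple distinct eigenvalues (finitely many accumulation points) whose eigenvectors form a Riesz basis; it generates the $C_0$-semigroup $(T(t))$. $S(\tau)u=\int_0^\tau T(s)Bu\,ds$, $\Delta(\tau)=T(\tau)+S(\tau)F$. *)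

theory Defs
  imports "HOL-Analysis.Analysis"
begin

text \<open>HOL-Analysis has no complex vector spaces / complex inner products, so we
introduce them as type classes (complex scalar multiplication compatible with
the real one, and a sesquilinear inner product inducing the norm).\<close>

class cvec = real_vector +
  fixes scaleC :: "complex \<Rightarrow> 'a \<Rightarrow> 'a"
  assumes scaleC_add_right: "scaleC a (x + y) = scaleC a x + scaleC a y"
    and scaleC_add_left: "scaleC (a + b) x = scaleC a x + scaleC b x"
    and scaleC_scaleC: "scaleC a (scaleC b x) = scaleC (a * b) x"
    and scaleC_one: "scaleC 1 x = x"
    and scaleR_scaleC: "scaleR r x = scaleC (complex_of_real r) x"

class chilbert = cvec + banach +
  fixes cinner :: "'a \<Rightarrow> 'a \<Rightarrow> complex"
  assumes cinner_commute: "cinner x y = cnj (cinner y x)"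
    and cinner_add_left: "cinner (x + y) z = cinner x z + cinner y z"
    and cinner_scaleC_left: "cinner (scaleC c x) y = cnj c * cinner x y"
    and cinner_norm: "norm x = sqrt (Re (cinner x x))"

instantiation complex :: chilbert
begin
definition scaleC_complex :: "complex \<Rightarrow> complex \<Rightarrow> complex" where
  "scaleC_complex a x = a * x"
definition cinner_complex :: "complex \<Rightarrow> complex \<Rightarrow> complex" where
  "cinner_complex x y = cnj x * y"
instance
proof
  fix a b x y z :: complex and r :: real and c :: complex
  show "scaleC a (x + y) = scaleC a x + scaleC a y"
    by (simp add: scaleC_complex_def algebra_simps)
  show "scaleC (a + b) x = scaleC a x + scaleC b x"
    by (simp add: scaleC_complex_def algebra_simps)
  show "scaleC a (scaleC b x) = scaleC (a * b) x"
    by (simp add: scaleC_complex_def)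
  show "scaleC 1 x = x" by (simp add: scaleC_complex_def)
  show "scaleR r x = scaleC (complex_of_real r) x"
    by (simp add: scaleC_complex_def scaleR_conv_of_real)
  show "cinner x y = cnj (cinner y x)" by (simp add: cinner_complex_def mult.commute)
  show "cinner (x + y) z = cinner x z + cinner y z"
    by (simp add: cinner_complex_def algebra_simps)
  show "cinner (scaleC c x) y = cnj c * cinner x y"
    by (simp add: cinner_complex_def scaleC_complex_def)
  show "norm x = sqrt (Re (cinner x x))"
    by (simp add: cinner_complex_def complex_mult_cnj cmod_def power2_eq_square)
qed
end

definition clin :: "('a::cvec \<Rightarrow> 'b::cvec) \<Rightarrow> bool" where
  "clin f \<longleftrightarrow> (\<forall>x y. f (x + y) = f x + f y) \<and> (\<forall>c x. f (scaleC c x) = scaleC c (f x))"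

text \<open>Bounded complex-linear operators, i.e. elements of L(X,Y).\<close>
definition bounded_clin :: "('a::{cvec,real_normed_vector} \<Rightarrow> 'b::{cvec,real_normed_vector}) \<Rightarrow> bool" where
  "bounded_clin f \<longleftrightarrow> clin f \<and> (\<exists>K. \<forall>x. norm (f x) \<le> K * norm x)"

definition csubspace :: "'a::cvec set \<Rightarrow> bool" where
  "csubspace D \<longleftrightarrow> 0 \<in> D \<and> (\<forall>x\<in>D. \<forall>y\<in>D. x + y \<in> D) \<and> (\<forall>c. \<forall>x\<in>D. scaleC c x \<in> D)"

definition closed_operator :: "('a::chilbert \<Rightarrow> 'a) \<Rightarrow> 'a set \<Rightarrow> bool" where
  "closed_operator A D \<longleftrightarrow> csubspace D
     \<and> (\<forall>x\<in>D. \<forall>y\<in>D. A (x + y) = A x + A y)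
     \<and> (\<forall>c. \<forall>x\<in>D. A (scaleC c x) = scaleC c (A x))
     \<and> closed {(x, A x) | x. x \<in> D}"

definition riesz_basis :: "(nat \<Rightarrow> 'a::chilbert) \<Rightarrow> bool" where
  "riesz_basis phi \<longleftrightarrow>
     closure {(\<Sum>n<N. scaleC (\<alpha> n) (phi n)) | \<alpha> N. True} = UNIV
   \<and> (\<exists>m M. 0 < m \<and> 0 < M \<and>
        (\<forall>\<alpha> N. m * (\<Sum>n<N. (cmod (\<alpha> n))\<^sup>2) \<le> (norm (\<Sum>n<N. scaleC (\<alpha> n) (phi n)))\<^sup>2
              \<and> (norm (\<Sum>n<N. scaleC (\<alpha> n) (phi n)))\<^sup>2 \<le> M * (\<Sum>n<N. (cmod (\<alpha> n))\<^sup>2)))"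

definition riesz_spectral :: "('a::chilbert \<Rightarrow> 'a) \<Rightarrow> 'a set \<Rightarrow> (nat \<Rightarrow> complex) \<Rightarrow> (nat \<Rightarrow> 'a) \<Rightarrow> bool" where
  "riesz_spectral A D lam phi \<longleftrightarrow> closed_operator A D
     \<and> inj lam
     \<and> (\<forall>n. phi n \<in> D \<and> phi n \<noteq> 0 \<and> A (phi n) = scaleC (lam n) (phi n))
     \<and> (\<forall>z x. x \<in> D \<and> x \<noteq> 0 \<and> A x = scaleC z x \<longrightarrow> (\<exists>n c. z = lam n \<and> x = scaleC c (phi n)))
     \<and> riesz_basis phi
     \<and> finite {z. z islimpt range lam}"

definition c0_semigroup :: "(real \<Rightarrow> 'a::chilbert \<Rightarrow> 'a) \<Rightarrow> bool" where
  "c0_semigroup T \<longleftrightarrow> (\<forall>t\<ge>0. bounded_clin (T t))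
     \<and> T 0 = id
     \<and> (\<forall>s\<ge>0. \<forall>t\<ge>0. T (s + t) = T s \<circ> T t)
     \<and> (\<forall>x. ((\<lambda>t. T t x) \<longlongrightarrow> x) (at_right 0))"

definition generates :: "('a::chilbert \<Rightarrow> 'a) \<Rightarrow> 'a set \<Rightarrow> (real \<Rightarrow> 'a \<Rightarrow> 'a) \<Rightarrow> bool" where
  "generates A D T \<longleftrightarrow> c0_semigroup T
     \<and> D = {x. \<exists>y. ((\<lambda>h. scaleR (1 / h) (T h x - x)) \<longlongrightarrow> y) (at_right 0)}
     \<and> (\<forall>x\<in>D. ((\<lambda>h. scaleR (1 / h) (T h x - x)) \<longlongrightarrow> A x) (at_right 0))"

definition resolvent_set :: "('a::chilbert \<Rightarrow> 'a) \<Rightarrow> complex set" where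
  "resolvent_set L = {z. bij (\<lambda>x. scaleC z x - L x) \<and> bounded_clin (inv (\<lambda>x. scaleC z x - L x))}"

definition resolvent :: "complex \<Rightarrow> ('a::chilbert \<Rightarrow> 'a) \<Rightarrow> 'a \<Rightarrow> 'a" where
  "resolvent z L = inv (\<lambda>x. scaleC z x - L x)"

definition Sop :: "(real \<Rightarrow> 'a::chilbert \<Rightarrow> 'a) \<Rightarrow> (complex \<Rightarrow> 'a) \<Rightarrow> real \<Rightarrow> complex \<Rightarrow> 'a" where
  "Sop T B \<tau> u = integral {0..\<tau>} (\<lambda>s. T s (B u))"

definition Delta :: "(real \<Rightarrow> 'a::chilbert \<Rightarrow> 'a) \<Rightarrow> (complex \<Rightarrow> 'a) \<Rightarrow> ('a \<Rightarrow> complex) \<Rightarrow> real \<Rightarrow> 'a \<Rightarrow> 'a" where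
  "Delta T B F \<tau> x = T \<tau> x + Sop T B \<tau> (F x)"

end

theory Submission
  imports Defs
begin

lemma scaleC_zero_left[simp]: "scaleC 0 (x::'a::cvec) = 0"
proof -
  have "scaleC 0 x = scaleC 0 x + scaleC 0 x" using scaleC_add_left[of 0 0 x] by simp
  then show ?thesis by simp
qed

lemma scaleC_zero_right[simp]: "scaleC c (0::'a::cvec) = 0"
proof -
  have "scaleC c (0::'a) = scaleC c 0 + scaleC c 0" using scaleC_add_right[of c 0 0] by simp
  then show ?thesis by simp
qed

lemma scaleC_minus_right: "scaleC c (- (x::'a::cvec)) = - scaleC c x"
  using scaleC_add_right[of c x "-x"] by (simp add: eq_neg_iff_add_eq_0 add.commute)

lemma scaleC_diff_right: "scaleC c ((x::'a::cvec) - y) = scaleC c x - scaleC c y"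
  by (simp only: diff_conv_add_uminus scaleC_add_right scaleC_minus_right)

lemma scaleC_minus_left: "scaleC (- c) (x::'a::cvec) = - scaleC c x"
  using scaleC_add_left[of c "-c" x] by (simp add: eq_neg_iff_add_eq_0 add.commute)

lemma scaleC_diff_left: "scaleC (c - d) (x::'a::cvec) = scaleC c x - scaleC d x"
  by (simp only: diff_conv_add_uminus scaleC_add_left scaleC_minus_left)

lemma scaleC_sum_right: "scaleC c (sum f A) = (\<Sum>i\<in>A. scaleC c (f i :: 'a::cvec))"
  by (induction A rule: infinite_finite_induct) (simp_all add: scaleC_add_right)

lemma scaleC_sum_left: "scaleC (sum f A) (x::'a::cvec) = (\<Sum>i\<in>A. scaleC (f i) x)"
  by (induction A rule: infinite_finite_induct) (simp_all add: scaleC_add_left)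

lemma scaleC_scaleR_comm: "scaleR r (scaleC c (x::'a::cvec)) = scaleC c (scaleR r x)"
  by (simp add: scaleR_scaleC scaleC_scaleC mult.commute)

lemma scaleC_scaleR_left: "scaleC (r *\<^sub>R a) (x::'a::cvec) = scaleC a (r *\<^sub>R x)"
  by (simp add: scaleR_scaleC scaleC_scaleC scaleC_complex_def mult.commute)

lemma scaleC_complex_simp[simp]: "scaleC a (x::complex) = a * x"
  by (simp add: scaleC_complex_def)

lemma cinner_scaleC_right: "cinner x (scaleC c y) = c * cinner x (y::'a::chilbert)"
  by (metis cinner_commute cinner_scaleC_left complex_cnj_cnj complex_cnj_mult)

lemma cinner_self_real: "cinner x x = complex_of_real (Re (cinner x (x::'a::chilbert)))"
  by (metis cinner_commute complex_is_Real_iff Reals_cnj_iff of_real_Re)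

lemma norm_scaleC[simp]: "norm (scaleC c (x::'a::chilbert)) = cmod c * norm x"
proof -
  have "cinner (scaleC c x) (scaleC c x) = cnj c * c * cinner x x"
    by (simp add: cinner_scaleC_left cinner_scaleC_right)
  also have "cnj c * c = complex_of_real ((cmod c)^2)"
    by (metis complex_norm_square mult.commute of_real_power)
  finally have "Re (cinner (scaleC c x) (scaleC c x)) = (cmod c)^2 * Re (cinner x x)"
    by simp
  have "norm (scaleC c x) = sqrt (Re (cinner (scaleC c x) (scaleC c x)))" by (rule cinner_norm)
  also have "\<dots> = sqrt ((cmod c)^2) * sqrt (Re (cinner x x))"
    by (simp only: \<open>Re (cinner (scaleC c x) (scaleC c x)) = (cmod c)^2 * Re (cinner x x)\<close> real_sqrt_mult)
  also have "\<dots> = cmod c * norm x"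
    by (simp only: real_sqrt_abs abs_norm_cancel cinner_norm[of x, symmetric])
  finally show ?thesis .
qed

lemma bounded_linear_scaleC_right: "bounded_linear (\<lambda>x::'a::chilbert. scaleC c x)"
  by (rule bounded_linear_intro[where K="cmod c"]) (auto simp: scaleC_add_right scaleC_scaleR_comm)

lemma bounded_bilinear_scaleC: "bounded_bilinear (\<lambda>c (x::'a::chilbert). scaleC c x)"
proof (rule bounded_bilinear.intro)
  show "\<exists>K. \<forall>a b. norm (scaleC a (b::'a)) \<le> norm a * norm b * K"
    by (rule exI[of _ 1]) simp
qed (auto simp: scaleC_add_right scaleC_add_left scaleC_scaleR_comm scaleC_scaleR_left)

lemma clin_linear: "clin f \<Longrightarrow> linear f"
  unfolding clin_def by (intro linearI) (simp_all add: scaleR_scaleC)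

lemma bounded_clin_linear: "bounded_clin f \<Longrightarrow> bounded_linear f"
proof -
  assume a: "bounded_clin f"
  then obtain K where K: "\<forall>x. norm (f x) \<le> K * norm x" and c: "clin f" unfolding bounded_clin_def by blast
  have l: "linear f" using clin_linear[OF c] .
  show ?thesis
    by (rule bounded_linear_intro[where K=K]) (use l K linear_add linear_scale in \<open>auto simp: mult.commute\<close>)
qed

lemma bounded_clin_add: "bounded_clin f \<Longrightarrow> f (x + y) = f x + f y"
  unfolding bounded_clin_def clin_def by blast
lemma bounded_clin_scaleC: "bounded_clin f \<Longrightarrow> f (scaleC c x) = scaleC c (f x)"
  unfolding bounded_clin_def clin_def by blast
lemma bounded_clin_diff: "bounded_clin f \<Longrightarrow> f (x - y) = f x - f y"
  by (rule linear_diff[OF bounded_linear.linear[OF bounded_clin_linear]])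
lemma bounded_clin_zero: "bounded_clin f \<Longrightarrow> f 0 = 0"
  by (rule linear_0[OF bounded_linear.linear[OF bounded_clin_linear]])
lemma bounded_clin_sum: "bounded_clin f \<Longrightarrow> f (sum g A) = (\<Sum>i\<in>A. f (g i))"
  by (rule linear_sum[OF bounded_linear.linear[OF bounded_clin_linear]])
lemma bounded_clin_bound: "bounded_clin f \<Longrightarrow> \<exists>K>0. \<forall>x. norm (f x) \<le> K * norm x"
  using bounded_linear.pos_bounded[OF bounded_clin_linear] by (metis mult.commute)
lemma bounded_clin_cont: "bounded_clin f \<Longrightarrow> continuous_on S f"
  by (rule linear_continuous_on[OF bounded_clin_linear])
lemma bounded_clin_tendsto: "bounded_clin f \<Longrightarrow> (g \<longlongrightarrow> l) F \<Longrightarrow> ((\<lambda>x. f (g x)) \<longlongrightarrow> f l) F"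
  by (rule bounded_linear.tendsto[OF bounded_clin_linear])

lemma bounded_clin_compose: "bounded_clin f \<Longrightarrow> bounded_clin g \<Longrightarrow> bounded_clin (\<lambda>x. f (g x))"
proof -
  assume f: "bounded_clin f" and g: "bounded_clin g"
  obtain K1 where K1: "\<forall>x. norm (f x) \<le> K1 * norm x" "K1 > 0" using bounded_clin_bound[OF f] by blast
  obtain K2 where K2: "\<forall>x. norm (g x) \<le> K2 * norm x" "K2>0" using bounded_clin_bound[OF g] by blast
  have "norm (f (g x)) \<le> (K1*K2) * norm x" for x
  proof -
    have "norm (f (g x)) \<le> K1 * norm (g x)" using K1 by blast
    also have "\<dots> \<le> K1 * (K2 * norm x)" using K1 K2 by (simp add: mult_left_mono)
    finally show ?thesis by (simp add: mult.assoc)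
  qed
  moreover have "clin (\<lambda>x. f (g x))" using f g unfolding bounded_clin_def clin_def by auto
  ultimately show ?thesis unfolding bounded_clin_def by blast
qed

lemma bounded_clin_plus: "bounded_clin f \<Longrightarrow> bounded_clin g \<Longrightarrow> bounded_clin (\<lambda>x. f x + g x)"
proof -
  assume f: "bounded_clin f" and g: "bounded_clin g"
  obtain K1 where K1: "\<forall>x. norm (f x) \<le> K1 * norm x" "K1 > 0" using bounded_clin_bound[OF f] by blast
  obtain K2 where K2: "\<forall>x. norm (g x) \<le> K2 * norm x" "K2>0" using bounded_clin_bound[OF g] by blast
  have "norm (f x + g x) \<le> (K1+K2) * norm x" for x
  proof -
    have "norm (f x + g x) \<le> norm (f x) + norm (g x)" by (rule norm_triangle_ineq)
    also have "\<dots> \<le> K1 * norm x + K2 * norm x" using K1 K2 by (intro add_mono) auto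
    finally show ?thesis by (simp add: distrib_right)
  qed
  moreover have "clin (\<lambda>x. f x + g x)" using f g unfolding bounded_clin_def clin_def
    by (auto simp: scaleC_add_right algebra_simps)
  ultimately show ?thesis unfolding bounded_clin_def by blast
qed

lemma bounded_clin_scale: "bounded_clin (f::'a::chilbert \<Rightarrow> 'b::chilbert) \<Longrightarrow> bounded_clin (\<lambda>x. scaleC c (f x))"
proof -
  assume f: "bounded_clin f"
  obtain K1 where K1: "\<forall>x. norm (f x) \<le> K1 * norm x" "K1 > 0" using bounded_clin_bound[OF f] by blast
  have "norm (scaleC c (f x)) \<le> (cmod c * K1) * norm x" for x
    using K1 by (simp add: mult.assoc mult_left_mono)
  moreover have "clin (\<lambda>x. scaleC c (f x))" using f unfolding bounded_clin_def clin_def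
    by (auto simp: scaleC_add_right scaleC_scaleC mult.commute)
  ultimately show ?thesis unfolding bounded_clin_def by blast
qed

lemma scaleC_minus1: "scaleC (-1) (y::'a::cvec) = - y"
  using scaleC_minus_left[of 1 y] by (simp add: scaleC_one)

lemma bounded_clin_minus: "bounded_clin (f::'a::chilbert \<Rightarrow> 'b::chilbert) \<Longrightarrow> bounded_clin g \<Longrightarrow> bounded_clin (\<lambda>x. f x - g x)"
proof -
  assume f: "bounded_clin f" and g: "bounded_clin g"
  have "bounded_clin (\<lambda>x. f x + scaleC (-1) (g x))"
    by (intro bounded_clin_plus bounded_clin_scale f g)
  then show ?thesis by (simp add: scaleC_minus1)
qed

lemma bounded_clin_id: "bounded_clin (\<lambda>x::'a::chilbert. x)"
  unfolding bounded_clin_def clin_def by (auto intro: exI[of _ 1])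

lemma bounded_clin_const0: "bounded_clin (\<lambda>x::'a::chilbert. 0::'b::chilbert)"
  unfolding bounded_clin_def clin_def by (auto intro: exI[of _ 1])

lemma bounded_clin_rank1: "bounded_clin (f::'a::chilbert \<Rightarrow> complex) \<Longrightarrow> bounded_clin (\<lambda>x. scaleC (f x) (v::'b::chilbert))"
proof -
  assume f: "bounded_clin f"
  obtain K1 where K1: "\<forall>x. norm (f x) \<le> K1 * norm x" "K1 > 0" using bounded_clin_bound[OF f] by blast
  have "norm (scaleC (f x) v) \<le> (K1 * norm v) * norm x" for x
    using K1 mult_right_mono[of "cmod (f x)" "K1 * norm x" "norm v"] by (simp add: mult.commute mult.left_commute)
  moreover have "clin (\<lambda>x. scaleC (f x) v)" using f unfolding bounded_clin_def clin_def
    by (auto simp: scaleC_add_left scaleC_scaleC)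
  ultimately show ?thesis unfolding bounded_clin_def by blast
qed

section \<open>Dense extension\<close>

lemma csubspace_diff: "csubspace V \<Longrightarrow> x \<in> V \<Longrightarrow> y \<in> V \<Longrightarrow> x - (y::'a::cvec) \<in> V"
  unfolding csubspace_def using scaleC_minus1[of y] by (metis diff_conv_add_uminus)

lemma dense_seq: "closure V = UNIV \<Longrightarrow> \<exists>xs. (\<forall>n. xs n \<in> V) \<and> xs \<longlonglongrightarrow> (x::'a::metric_space)"
  using closure_sequential[of x V] by auto

lemma ext_op:
  fixes f :: "'a::chilbert \<Rightarrow> 'b::chilbert"
  assumes dense: "closure V = UNIV" and sub: "csubspace V"
    and add: "\<forall>x\<in>V. \<forall>y\<in>V. f (x + y) = f x + f y"
    and sc: "\<forall>c. \<forall>x\<in>V. f (scaleC c x) = scaleC c (f x)"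
    and bd: "\<forall>x\<in>V. norm (f x) \<le> K * norm x" and K: "0 \<le> K"
  shows "\<exists>g. bounded_clin g \<and> (\<forall>x\<in>V. g x = f x) \<and> (\<forall>x. norm (g x) \<le> K * norm x)"
proof -
  have fdiff: "f (x - y) = f x - f y" if "x \<in> V" "y \<in> V" for x y
  proof -
    have "f x = f ((x - y) + y)" by simp
    also have "\<dots> = f (x - y) + f y" using add csubspace_diff[OF sub that] that by blast
    finally show ?thesis by simp
  qed
  have "K-lipschitz_on V f"
  proof (rule lipschitz_onI)
    fix x y assume xy: "x \<in> V" "y \<in> V"
    have "dist (f x) (f y) = norm (f (x - y))" using fdiff[OF xy] by (simp add: dist_norm)
    also have "\<dots> \<le> K * norm (x - y)" using bd csubspace_diff[OF sub xy] by blast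
    finally show "dist (f x) (f y) \<le> K * dist x y" by (simp add: dist_norm)
  qed (rule K)
  then have uc: "uniformly_continuous_on V f" by (rule lipschitz_on_uniformly_continuous)
  obtain g where g1: "uniformly_continuous_on (closure V) g" and g2: "\<And>x. x \<in> V \<Longrightarrow> f x = g x"
  proof (rule uniformly_continuous_on_extension_on_closure[OF uc])
    fix g assume "uniformly_continuous_on (closure V) g" "\<And>x. x \<in> V \<Longrightarrow> f x = g x"
    then show thesis using that by simp
  qed
  have gc: "continuous_on UNIV g" using uniformly_continuous_imp_continuous[OF g1] dense by simp
  have glim: "(\<lambda>n. g (xs n)) \<longlonglongrightarrow> g x" if "xs \<longlonglongrightarrow> x" for xs x
  proof -
    have "isCont g x" using gc by (simp add: continuous_on_eq_continuous_at)
    then show ?thesis using isCont_tendsto_compose that by blast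
  qed
  have gadd: "g (x + y) = g x + g y" for x y
  proof -
    obtain xs where xs: "\<forall>n. xs n \<in> V" "xs \<longlonglongrightarrow> x" using dense_seq[OF dense] by blast
    obtain ys where ys: "\<forall>n. ys n \<in> V" "ys \<longlonglongrightarrow> y" using dense_seq[OF dense] by blast
    have "(\<lambda>n. g (xs n + ys n)) \<longlonglongrightarrow> g (x + y)" by (rule glim[OF tendsto_add[OF xs(2) ys(2)]])
    moreover have "(\<lambda>n. g (xs n + ys n)) = (\<lambda>n. g (xs n) + g (ys n))"
    proof
      fix n
      have "xs n + ys n \<in> V" using sub xs ys unfolding csubspace_def by blast
      then show "g (xs n + ys n) = g (xs n) + g (ys n)" using g2[of "xs n + ys n"] g2[of "xs n"] g2[of "ys n"] add xs ys by simp
    qed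
    moreover have "(\<lambda>n. g (xs n) + g (ys n)) \<longlonglongrightarrow> g x + g y" by (rule tendsto_add[OF glim[OF xs(2)] glim[OF ys(2)]])
    ultimately show ?thesis using LIMSEQ_unique by metis
  qed
  have gsc: "g (scaleC c x) = scaleC c (g x)" for c x
  proof -
    obtain xs where xs: "\<forall>n. xs n \<in> V" "xs \<longlonglongrightarrow> x" using dense_seq[OF dense] by blast
    have "(\<lambda>n. scaleC c (xs n)) \<longlonglongrightarrow> scaleC c x"
      using bounded_linear.tendsto[OF bounded_linear_scaleC_right xs(2)] .
    then have "(\<lambda>n. g (scaleC c (xs n))) \<longlonglongrightarrow> g (scaleC c x)" by (rule glim)
    moreover have "(\<lambda>n. g (scaleC c (xs n))) = (\<lambda>n. scaleC c (g (xs n)))"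
    proof
      fix n
      have "scaleC c (xs n) \<in> V" using sub xs unfolding csubspace_def by blast
      then show "g (scaleC c (xs n)) = scaleC c (g (xs n))" using g2[of "scaleC c (xs n)"] g2[of "xs n"] sc xs by simp
    qed
    moreover have "(\<lambda>n. scaleC c (g (xs n))) \<longlonglongrightarrow> scaleC c (g x)"
      using bounded_linear.tendsto[OF bounded_linear_scaleC_right glim[OF xs(2)]] .
    ultimately show ?thesis using LIMSEQ_unique by metis
  qed
  have gbd: "norm (g x) \<le> K * norm x" for x
  proof -
    obtain xs where xs: "\<forall>n. xs n \<in> V" "xs \<longlonglongrightarrow> x" using dense_seq[OF dense] by blast
    have "(\<lambda>n. norm (g (xs n))) \<longlonglongrightarrow> norm (g x)" by (rule tendsto_norm[OF glim[OF xs(2)]])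
    moreover have "(\<lambda>n. K * norm (xs n)) \<longlonglongrightarrow> K * norm x" by (rule tendsto_mult_left[OF tendsto_norm[OF xs(2)]])
    moreover have "\<forall>n. norm (g (xs n)) \<le> K * norm (xs n)" using bd xs g2 by simp
    ultimately show ?thesis using LIMSEQ_le by blast
  qed
  have "bounded_clin g" unfolding bounded_clin_def clin_def using gadd gsc gbd by blast
  then show ?thesis using g2 gbd by auto
qed

lemma dense_eq:
  assumes dense: "closure V = UNIV" and "bounded_clin (g1::'a::chilbert \<Rightarrow> 'b::chilbert)" "bounded_clin g2"
    and "\<forall>x\<in>V. g1 x = g2 x"
  shows "g1 = g2"
proof
  fix x
  obtain xs where xs: "\<forall>n. xs n \<in> V" "xs \<longlonglongrightarrow> x" using dense_seq[OF dense] by blast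
  have "(\<lambda>n. g1 (xs n)) \<longlonglongrightarrow> g1 x" by (rule bounded_clin_tendsto[OF assms(2) xs(2)])
  moreover have "(\<lambda>n. g2 (xs n)) \<longlonglongrightarrow> g2 x" by (rule bounded_clin_tendsto[OF assms(3) xs(2)])
  moreover have "(\<lambda>n. g1 (xs n)) = (\<lambda>n. g2 (xs n))" using assms(4) xs by auto
  ultimately show "g1 x = g2 x" using LIMSEQ_unique by auto
qed

section \<open>Uniform boundedness\<close>

lemma ubp:
  fixes L :: "nat \<Rightarrow> 'a::banach \<Rightarrow> 'b::real_normed_vector"
  assumes lin: "\<And>n. bounded_linear (L n)" and pw: "\<And>x. \<exists>C. \<forall>n. norm (L n x) \<le> C"
  shows "\<exists>K. \<forall>n x. norm (L n x) \<le> K * norm x"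
proof -
  define C where "C k = {x. \<forall>n. norm (L n x) \<le> real k}" for k :: nat
  have clo: "closed (C k)" for k
  proof -
    have "C k = (\<Inter>n. {x. norm (L n x) \<le> real k})" by (auto simp: C_def)
    moreover have "closed {x. norm (L n x) \<le> real k}" for n
      by (intro closed_Collect_le continuous_intros linear_continuous_on[OF lin])
    ultimately show ?thesis by auto
  qed
  have un: "\<Union>(range C) = UNIV"
  proof -
    have "x \<in> \<Union>(range C)" for x
    proof -
      obtain c where "\<forall>n. norm (L n x) \<le> c" using pw by blast
      moreover obtain k :: nat where "c \<le> real k" using real_arch_simple by blast
      ultimately have "x \<in> C k" by (auto simp: C_def intro: order_trans)
      then show ?thesis by blast
    qed
    then show ?thesis by blast
  qed
  have "\<exists>k. interior (C k) \<noteq> {}"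
  proof (rule ccontr)
    assume "\<not> ?thesis"
    then have "euclidean interior_of \<Union>(range C) = {}"
      using Baire_category_alt[of euclidean "range C"] completely_metrizable_space_euclidean clo
      by (auto simp: closed_closedin[symmetric])
    then show False using un by simp
  qed
  then obtain k x0 where "x0 \<in> interior (C k)" by blast
  then obtain r where r: "r > 0" "ball x0 r \<subseteq> C k" using open_contains_ball by (metis open_interior interior_subset subset_trans)
  have "norm (L n y) \<le> (4 * real k / r) * norm y" for n y
  proof (cases "y = 0")
    case True then show ?thesis using linear_0[OF bounded_linear.linear[OF lin]] by simp
  next
    case False
    define a where "a = r / (2 * norm y)"
    have a: "a > 0" using False r by (simp add: a_def)
    have "norm (a *\<^sub>R y) = r / 2" using False r by (simp add: a_def)
    then have "x0 + a *\<^sub>R y \<in> ball x0 r" using r by (simp add: dist_norm)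
    then have z: "norm (L n (x0 + a *\<^sub>R y)) \<le> real k" using r C_def by blast
    have x0: "norm (L n x0) \<le> real k" using r C_def by (metis centre_in_ball mem_Collect_eq subsetD)
    have "L n (x0 + a *\<^sub>R y) = L n x0 + a *\<^sub>R L n y"
      using lin[of n] by (simp add: linear_add linear_scale bounded_linear.linear)
    then have "a *\<^sub>R L n y = L n (x0 + a *\<^sub>R y) - L n x0" by simp
    then have "a * norm (L n y) \<le> 2 * real k" using z x0 a
      by (metis norm_scaleR abs_of_pos norm_triangle_ineq4 order_trans add_mono mult_2)
    then have "norm (L n y) \<le> 2 * real k / a" using a by (simp add: field_simps)
    also have "\<dots> = (4 * real k / r) * norm y" using False r by (simp add: a_def field_simps)
    finally show ?thesis .
  qed
  then show ?thesis by blast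
qed

section \<open>Semigroups\<close>

lemma sg_bcl: "c0_semigroup E \<Longrightarrow> 0 \<le> t \<Longrightarrow> bounded_clin (E t)"
  unfolding c0_semigroup_def by blast
lemma sg_0: "c0_semigroup E \<Longrightarrow> E 0 x = x"
  unfolding c0_semigroup_def by simp
lemma sg_add: "c0_semigroup E \<Longrightarrow> 0 \<le> s \<Longrightarrow> 0 \<le> t \<Longrightarrow> E (s + t) x = E s (E t x)"
  unfolding c0_semigroup_def by (metis comp_apply)
lemma sg_rc: "c0_semigroup E \<Longrightarrow> ((\<lambda>t. E t x) \<longlongrightarrow> x) (at_right 0)"
  unfolding c0_semigroup_def by blast
lemma sg_lin: "c0_semigroup E \<Longrightarrow> 0 \<le> t \<Longrightarrow> linear (E t)"
  using sg_bcl bounded_clin_linear bounded_linear.linear by blast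

lemma rc_eps:
  assumes "(f \<longlongrightarrow> l) (at_right (0::real))" "e > 0"
  shows "\<exists>d>0. \<forall>h. 0 < h \<and> h < d \<longrightarrow> dist (f h) l < e"
proof -
  have "eventually (\<lambda>h. dist (f h) l < e) (at_right 0)" using tendstoD[OF assms] .
  then show ?thesis unfolding eventually_at_right_field by blast
qed

lemma sg_rc_eps:
  assumes "c0_semigroup E" "e > 0"
  shows "\<exists>d>0. \<forall>h. 0 \<le> h \<and> h < d \<longrightarrow> norm (E h x - x) < e"
proof -
  obtain d where "d > 0" "\<forall>h. 0 < h \<and> h < d \<longrightarrow> dist (E h x) x < e"
    using rc_eps[OF sg_rc[OF assms(1)] assms(2)] by blast
  moreover have "E 0 x = x" using sg_0[OF assms(1)] .
  ultimately show ?thesis using assms(2)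
    by (metis dist_norm order_le_less right_minus_eq norm_zero)
qed

lemma sg_local_bound:
  assumes sg: "c0_semigroup E"
  shows "\<exists>\<delta>>0. \<exists>M. \<forall>t. 0 \<le> t \<and> t \<le> \<delta> \<longrightarrow> (\<forall>x. norm (E t x) \<le> M * norm x)"
proof (rule ccontr)
  assume neg: "\<not> ?thesis"
  have "\<forall>n::nat. \<exists>t. 0 \<le> t \<and> t \<le> inverse (real (Suc n)) \<and> (\<exists>x. norm (E t x) > real n * norm x)"
  proof
    fix n :: nat
    have "inverse (real (Suc n)) > 0" by simp
    then have "\<not> (\<forall>t. 0 \<le> t \<and> t \<le> inverse (real (Suc n)) \<longrightarrow> (\<forall>x. norm (E t x) \<le> real n * norm x))"
      using neg by blast
    then show "\<exists>t. 0 \<le> t \<and> t \<le> inverse (real (Suc n)) \<and> (\<exists>x. norm (E t x) > real n * norm x)"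
      by (auto simp: not_le)
  qed
  then obtain tt where tt: "\<And>n. 0 \<le> tt n \<and> tt n \<le> inverse (real (Suc n)) \<and> (\<exists>x. norm (E (tt n) x) > real n * norm x)"
    by metis
  have lin: "bounded_linear (E (tt n))" for n using tt sg_bcl[OF sg] bounded_clin_linear by blast
  have pw: "\<exists>C. \<forall>n. norm (E (tt n) y) \<le> C" for y
  proof -
    have "(\<lambda>n. E (tt n) y) \<longlonglongrightarrow> y"
    proof (rule LIMSEQ_I)
      fix r :: real assume "r > 0"
      then obtain d where d: "d > 0" "\<forall>h. 0 \<le> h \<and> h < d \<longrightarrow> norm (E h y - y) < r"
        using sg_rc_eps[OF sg] by blast
      obtain N where N: "inverse (real (Suc N)) < d" using reals_Archimedean[OF d(1)] by blast
      have "norm (E (tt n) y - y) < r" if "n \<ge> N" for n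
      proof -
        have "inverse (real (Suc n)) \<le> inverse (real (Suc N))" using that by (simp add: field_simps)
        then have "tt n < d" using tt[of n] N by linarith
        then show ?thesis using d tt[of n] by blast
      qed
      then show "\<exists>N. \<forall>n\<ge>N. norm (E (tt n) y - y) < r" by blast
    qed
    then have "Bseq (\<lambda>n. E (tt n) y)" using convergent_imp_Bseq convergentI by blast
    then show ?thesis by (meson BseqE)
  qed
  obtain K where K: "\<forall>n x. norm (E (tt n) x) \<le> K * norm x" using ubp[OF lin pw] by blast
  obtain n :: nat where n: "K < real n" using reals_Archimedean2 by blast
  obtain x where x: "norm (E (tt n) x) > real n * norm x" using tt by blast
  have "real n * norm x < K * norm x" using x K by (meson less_le_trans)
  moreover have "K * norm x \<le> real n * norm x" using n by (simp add: mult_right_mono)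
  ultimately show False by simp
qed

lemma sg_bound:
  assumes sg: "c0_semigroup E"
  shows "\<exists>M>0. \<forall>t. 0 \<le> t \<and> t \<le> L \<longrightarrow> (\<forall>x. norm (E t x) \<le> M * norm x)"
proof -
  obtain \<delta> M0 where d: "\<delta> > 0" and M0: "\<forall>t. 0 \<le> t \<and> t \<le> \<delta> \<longrightarrow> (\<forall>x. norm (E t x) \<le> M0 * norm x)"
    using sg_local_bound[OF sg] by blast
  define M1 where "M1 = max M0 1"
  have M1: "M1 \<ge> 1" "M0 \<le> M1" by (auto simp: M1_def)
  have M1b: "\<forall>t. 0 \<le> t \<and> t \<le> \<delta> \<longrightarrow> (\<forall>x. norm (E t x) \<le> M1 * norm x)"
    using M0 M1 by (meson mult_right_mono norm_ge_zero order_trans)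
  have P: "\<forall>t. 0 \<le> t \<and> t \<le> real n * \<delta> \<longrightarrow> (\<forall>x. norm (E t x) \<le> M1 ^ (Suc n) * norm x)" for n
  proof (induction n)
    case 0
    then show ?case using M1 sg_0[OF sg] by (auto intro: order_trans[OF _ mult_right_mono[of 1 M1]])
  next
    case (Suc n)
    show ?case
    proof (intro allI impI)
      fix t x assume t: "0 \<le> t \<and> t \<le> real (Suc n) * \<delta>"
      have pw: "M1 \<le> M1 ^ Suc (Suc n)" using M1(1)
        by (metis One_nat_def Suc_le_mono le_add1 one_le_power power_increasing power_one_right plus_1_eq_Suc zero_less_Suc less_eq_Suc_le)
      show "norm (E t x) \<le> M1 ^ Suc (Suc n) * norm x"
      proof (cases "t \<le> \<delta>")
        case True
        then have "norm (E t x) \<le> M1 * norm x" using M1b t by blast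
        also have "\<dots> \<le> M1 ^ Suc (Suc n) * norm x" using pw by (simp add: mult_right_mono)
        finally show ?thesis .
      next
        case False
        have e: "E t x = E \<delta> (E (t - \<delta>) x)" using sg_add[OF sg, of \<delta> "t - \<delta>" x] d False by simp
        have "t - \<delta> \<le> real n * \<delta>" using t by (simp add: algebra_simps)
        then have "norm (E (t - \<delta>) x) \<le> M1 ^ Suc n * norm x" using Suc.IH False by auto
        moreover have "norm (E t x) \<le> M1 * norm (E (t - \<delta>) x)" using e M1b d by auto
        ultimately have "norm (E t x) \<le> M1 * (M1 ^ Suc n * norm x)"
          using M1 by (meson mult_left_mono order_trans zero_le_one)
        then show ?thesis by (simp add: mult.assoc)
      qed
    qed
  qed
  obtain n :: nat where n: "L / \<delta> \<le> real n" using real_arch_simple by blast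
  then have "L \<le> real n * \<delta>" using d by (simp add: field_simps)
  then have "\<forall>t. 0 \<le> t \<and> t \<le> L \<longrightarrow> (\<forall>x. norm (E t x) \<le> M1 ^ (Suc n) * norm x)" using P[of n] by auto
  moreover have "M1 ^ Suc n > 0" using M1 by simp
  ultimately show ?thesis by blast
qed

lemma sg_cont:
  assumes sg: "c0_semigroup E"
  shows "continuous_on {0..} (\<lambda>t. E t x)"
  unfolding continuous_on_iff
proof (intro ballI allI impI)
  fix t0 :: real and e :: real assume t0: "t0 \<in> {0..}" and e: "0 < e"
  obtain M where M: "M > 0" "\<forall>t. 0 \<le> t \<and> t \<le> t0 \<longrightarrow> (\<forall>x. norm (E t x) \<le> M * norm x)"
    using sg_bound[OF sg] by blast
  obtain d where d: "d > 0" "\<forall>h. 0 \<le> h \<and> h < d \<longrightarrow> norm (E h x - x) < e / M"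
    using sg_rc_eps[OF sg, of "e/M" x] e M by auto
  have "dist (E t x) (E t0 x) < e" if t: "t \<in> {0..}" "dist t t0 < d" for t
  proof (cases "t0 \<le> t")
    case True
    have "E t x = E t0 (E (t - t0) x)" using sg_add[OF sg, of t0 "t - t0" x] t0 True by simp
    then have "E t x - E t0 x = E t0 (E (t - t0) x - x)"
      using linear_diff[OF sg_lin[OF sg]] t0 by simp
    then have "dist (E t x) (E t0 x) \<le> M * norm (E (t - t0) x - x)" using M t0 by (simp add: dist_norm)
    also have "\<dots> < M * (e / M)" using d True t M by (intro mult_strict_left_mono) (auto simp: dist_real_def)
    also have "\<dots> = e" using M by simp
    finally show ?thesis .
  next
    case False
    have "E t0 x = E t (E (t0 - t) x)" using sg_add[OF sg, of t "t0 - t" x] t False by simp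
    then have "E t0 x - E t x = E t (E (t0 - t) x - x)"
      using linear_diff[OF sg_lin[OF sg]] t by simp
    then have "dist (E t x) (E t0 x) = norm (E t (E (t0 - t) x - x))"
      by (metis dist_commute dist_norm)
    also have "\<dots> \<le> M * norm (E (t0 - t) x - x)" using M t False by simp
    also have "\<dots> < M * (e / M)" using d False t M by (intro mult_strict_left_mono) (auto simp: dist_real_def)
    also have "\<dots> = e" using M by simp
    finally show ?thesis .
  qed
  then show "\<exists>d>0. \<forall>t\<in>{0..}. dist t t0 < d \<longrightarrow> dist (E t x) (E t0 x) < e" using d by blast
qed

lemma gen_sg: "generates G D E \<Longrightarrow> c0_semigroup E"
  unfolding generates_def by blast
lemma gen_lim: "generates G D E \<Longrightarrow> x \<in> D \<Longrightarrow> ((\<lambda>h. scaleR (1 / h) (E h x - x)) \<longlongrightarrow> G x) (at_right 0)"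
  unfolding generates_def by blast
lemma gen_inD: "generates G D E \<Longrightarrow> ((\<lambda>h. scaleR (1 / h) (E h x - x)) \<longlongrightarrow> y) (at_right 0) \<Longrightarrow> x \<in> D"
  unfolding generates_def by blast

lemma gen_inv:
  assumes g: "generates G D E" and x: "x \<in> D" and t: "0 \<le> t"
  shows "E t x \<in> D \<and> G (E t x) = E t (G x)"
proof -
  have sg: "c0_semigroup E" using gen_sg[OF g] .
  have l: "linear (E t)" using sg_lin[OF sg t] .
  have ev: "eventually (\<lambda>h. E t (scaleR (1 / h) (E h x - x)) = scaleR (1 / h) (E h (E t x) - E t x)) (at_right 0)"
  proof -
    have "E t (scaleR (1 / h) (E h x - x)) = scaleR (1 / h) (E h (E t x) - E t x)" if "h > 0" for h
    proof -
      have "E h (E t x) = E t (E h x)" using sg_add[OF sg, of h t x] sg_add[OF sg, of t h x] that t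
        by (simp add: add.commute)
      then show ?thesis using l by (simp add: linear_diff linear_scale)
    qed
    then show ?thesis unfolding eventually_at_right_field by (intro exI[of _ 1]) auto
  qed
  have lim: "((\<lambda>h. E t (scaleR (1 / h) (E h x - x))) \<longlongrightarrow> E t (G x)) (at_right 0)"
    using bounded_clin_tendsto[OF sg_bcl[OF sg t] gen_lim[OF g x]] .
  then have lim2: "((\<lambda>h. scaleR (1 / h) (E h (E t x) - E t x)) \<longlongrightarrow> E t (G x)) (at_right 0)"
    using Lim_transform_eventually ev by fast
  then have inD: "E t x \<in> D" using gen_inD[OF g] by blast
  have "G (E t x) = E t (G x)" using tendsto_unique[OF _ gen_lim[OF g inD] lim2] by simp
  then show ?thesis using inD by blast
qed

lemma gen_deriv:
  assumes g: "generates G D E" and x: "x \<in> D" and t: "0 < t"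
  shows "((\<lambda>s. E s x) has_vector_derivative E t (G x)) (at t)"
proof -
  have sg: "c0_semigroup E" using gen_sg[OF g] .
  define v where "v = E t (G x)"
  define q where "q h = scaleR (1 / h) (E h x - x)" for h
  have qh: "E h x - x = h *\<^sub>R q h" if "h \<noteq> 0" for h using that by (simp add: q_def)
  have "(\<lambda>h. norm (E (t + h) x - E t x - h *\<^sub>R v) / norm h) \<midarrow>0\<rightarrow> 0"
  proof (rule LIM_I)
    fix r :: real assume r: "0 < r"
    obtain M where M: "M > 0" "\<forall>s. 0 \<le> s \<and> s \<le> t \<longrightarrow> (\<forall>x. norm (E s x) \<le> M * norm x)"
      using sg_bound[OF sg] by blast
    obtain d1 where d1: "d1 > 0" "\<forall>h. 0 < h \<and> h < d1 \<longrightarrow> dist (q h) (G x) < r / (4 * M)"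
      using rc_eps[OF gen_lim[OF g x], of "r / (4*M)"] r M unfolding q_def by auto
    have "continuous_on {0..} (\<lambda>s. E s (G x))" using sg_cont[OF sg] .
    then have "\<forall>e>0. \<exists>\<delta>>0. \<forall>s\<in>{0..}. dist s t < \<delta> \<longrightarrow> dist (E s (G x)) (E t (G x)) < e"
      using t unfolding continuous_on_iff by auto
    moreover have "r / 4 > 0" using r by simp
    ultimately obtain d2 where d2: "d2 > 0" "\<forall>s\<in>{0..}. dist s t < d2 \<longrightarrow> dist (E s (G x)) (E t (G x)) < r / 4"
      by blast
    define d where "d = min d1 (min d2 t)"
    have d: "d > 0" using d1 d2 t by (simp add: d_def)
    have "norm (norm (E (t + h) x - E t x - h *\<^sub>R v) / norm h - 0) < r" if h: "h \<noteq> 0" "norm (h - 0) < d" for h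
    proof (cases "h > 0")
      case True
      have ht: "E (t + h) x = E t (E h x)" using sg_add[OF sg, of t h x] t True by simp
      have lt: "linear (E t)" using sg_lin[OF sg] t by simp
      have "E (t + h) x - E t x = E t (E h x - x)" using ht linear_diff[OF lt] by simp
      also have "\<dots> = h *\<^sub>R E t (q h)" using qh[OF h(1)] linear_scale[OF lt] by simp
      finally have "E (t + h) x - E t x - h *\<^sub>R v = h *\<^sub>R E t (q h - G x)"
        using linear_diff[OF lt] by (simp add: v_def scaleR_diff_right)
      then have "norm (E (t + h) x - E t x - h *\<^sub>R v) = h * norm (E t (q h - G x))"
        using True by simp
      also have "\<dots> \<le> h * (M * norm (q h - G x))" using M t True by (simp add: mult_left_mono)
      also have "\<dots> \<le> h * (M * (r / (4 * M)))"
        using d1 True h M unfolding d_def by (intro mult_left_mono) (auto simp: dist_norm)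
      also have "\<dots> = h * (r / 4)" using M by simp
      finally have "norm (E (t + h) x - E t x - h *\<^sub>R v) / norm h \<le> r / 4" using True by (simp add: field_simps)
      moreover have "r / 4 < r" using r by simp
      moreover have "norm (norm (E (t + h) x - E t x - h *\<^sub>R v) / norm h - 0) = norm (E (t + h) x - E t x - h *\<^sub>R v) / norm h"
        by simp
      ultimately show ?thesis by linarith
    next
      case False
      define k where "k = - h"
      have k: "0 < k" "k < d1" "k < d2" "k < t" using False h by (auto simp: k_def d_def)
      have tk: "E t x = E (t - k) (E k x)" using sg_add[OF sg, of "t - k" k x] k by simp
      have "E (t + h) x - E t x - h *\<^sub>R v = k *\<^sub>R (E t (G x) - E (t - k) (G x) - E (t - k) (q k - G x))"
      proof -
        have "E (t + h) x - E t x = - (E (t - k) (E k x - x))"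
          using tk linear_diff[OF sg_lin[OF sg]] k by (simp add: k_def)
        also have "\<dots> = - (k *\<^sub>R E (t - k) (q k))"
          using qh[of k] k linear_scale[OF sg_lin[OF sg]] by simp
        finally show ?thesis
          using linear_diff[OF sg_lin[OF sg]] k by (simp add: k_def v_def algebra_simps)
      qed
      then have "norm (E (t + h) x - E t x - h *\<^sub>R v) / norm h
          = norm (E t (G x) - E (t - k) (G x) - E (t - k) (q k - G x))"
        using k by (simp add: k_def)
      also have "\<dots> \<le> norm (E t (G x) - E (t - k) (G x)) + norm (E (t - k) (q k - G x))"
        by (rule norm_triangle_ineq4)
      also have "\<dots> < r / 4 + r / 4"
      proof (rule add_less_le_mono)
        show "norm (E t (G x) - E (t - k) (G x)) < r / 4"
        proof -
          have "dist (E (t - k) (G x)) (E t (G x)) < r / 4" using d2 k by (simp add: dist_real_def)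
          then show ?thesis by (simp add: dist_norm norm_minus_commute)
        qed
        have "norm (E (t - k) (q k - G x)) \<le> M * norm (q k - G x)" using M k by simp
        also have "\<dots> \<le> M * (r / (4 * M))" using d1 k M by (intro mult_left_mono) (auto simp: dist_norm)
        also have "\<dots> = r / 4" using M by simp
        finally show "norm (E (t - k) (q k - G x)) \<le> r / 4" .
      qed
      finally have A: "norm (E (t + h) x - E t x - h *\<^sub>R v) / norm h < r / 4 + r / 4" .
      then have "norm (E (t + h) x - E t x - h *\<^sub>R v) / norm h < r" using r by linarith
      moreover have "norm (norm (E (t + h) x - E t x - h *\<^sub>R v) / norm h - 0) = norm (E (t + h) x - E t x - h *\<^sub>R v) / norm h"
        by simp
      ultimately show ?thesis by linarith
    qed
    then show "\<exists>s>0. \<forall>h. h \<noteq> 0 \<and> norm (h - 0) < s \<longrightarrow> norm (norm (E (t + h) x - E t x - h *\<^sub>R v) / norm h - 0) < r"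
      using d by blast
  qed
  then show ?thesis unfolding has_vector_derivative_def has_derivative_at v_def
    by (simp add: bounded_linear_scaleR_left)
qed

lemma ode_scaleC:
  fixes f :: "real \<Rightarrow> 'a::chilbert"
  assumes L: "0 < L" and cont: "continuous_on {0..L} f"
    and der: "\<And>s. s \<in> {0<..<L} \<Longrightarrow> (f has_vector_derivative scaleC c (f s)) (at s)"
    and t: "t \<in> {0..L}"
  shows "f t = scaleC (exp (c * of_real t)) (f 0)"
proof -
  define e where "e = (\<lambda>s::real. exp (- c * of_real s))"
  define u where "u s = scaleC (e s) (f s)" for s
  have ed: "(e has_vector_derivative (- c * e s)) (at s)" for s
  proof -
    have "((\<lambda>z. exp (- c * z)) has_field_derivative (- c * exp (- c * of_real s))) (at (of_real s))"
      by (auto intro!: derivative_eq_intros)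
    then have "((\<lambda>x. exp (- c * of_real x)) has_vector_derivative (- c * exp (- c * of_real s))) (at s within UNIV)"
      by (rule has_vector_derivative_real_field)
    then show ?thesis by (simp add: e_def)
  qed
  have ud: "(u has_vector_derivative 0) (at s)" if s: "s \<in> {0<..<L}" for s
  proof -
    have "(u has_vector_derivative (scaleC (e s) (scaleC c (f s)) + scaleC (- c * e s) (f s))) (at s)"
      unfolding u_def by (rule bounded_bilinear.has_vector_derivative[OF bounded_bilinear_scaleC ed der[OF s]])
    moreover have "scaleC (e s) (scaleC c (f s)) + scaleC (- c * e s) (f s) = 0"
      by (simp add: scaleC_scaleC scaleC_minus_left mult.commute)
    ultimately show ?thesis by simp
  qed
  have uc: "continuous_on {0..L} u"
    unfolding u_def e_def
    by (rule bounded_bilinear.continuous_on[OF bounded_bilinear_scaleC _ cont]) (intro continuous_intros)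
  have u0: "u 0 = f 0" by (simp add: u_def e_def scaleC_one)
  have "u t = f 0"
  proof (rule has_derivative_zero_unique_strong_interval[of "{0, L}" 0 L u "f 0" t])
    fix x assume x: "x \<in> {0..L} - {0, L}"
    then have "x \<in> {0<..<L}" by auto
    then have "(u has_derivative (\<lambda>h. h *\<^sub>R 0)) (at x)" using ud has_vector_derivative_def by blast
    then show "(u has_derivative (\<lambda>h. 0)) (at x within {0..L})"
      by (simp add: has_derivative_at_withinI)
  qed (use uc u0 t in auto)
  then have "scaleC (exp (c * of_real t)) (u t) = scaleC (exp (c * of_real t)) (f 0)" by simp
  moreover have "scaleC (exp (c * of_real t)) (u t) = f t"
    by (simp add: u_def e_def scaleC_scaleC exp_minus_inverse scaleC_one flip: exp_add)
  ultimately show ?thesis by simp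
qed

lemma gen_eig:
  assumes g: "generates G D E" and x: "x \<in> D" and gx: "G x = scaleC c x" and t: "0 \<le> t"
  shows "E t x = scaleC (exp (c * of_real t)) x"
proof (cases "t = 0")
  case True
  then show ?thesis using sg_0[OF gen_sg[OF g]] by (simp add: scaleC_one)
next
  case False
  then have t0: "0 < t" using t by simp
  have sg: "c0_semigroup E" using gen_sg[OF g] .
  have "E t x = scaleC (exp (c * of_real t)) (E 0 x)"
  proof (rule ode_scaleC[OF t0])
    show "continuous_on {0..t} (\<lambda>s. E s x)" by (rule continuous_on_subset[OF sg_cont[OF sg]]) auto
    fix s assume s: "s \<in> {0<..<t}"
    have "((\<lambda>s. E s x) has_vector_derivative E s (G x)) (at s)" using gen_deriv[OF g x] s by simp
    moreover have "E s (G x) = scaleC c (E s x)" using gx bounded_clin_scaleC[OF sg_bcl[OF sg]] s by simp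
    ultimately show "((\<lambda>s. E s x) has_vector_derivative scaleC c (E s x)) (at s)" by simp
  qed (use t in auto)
  then show ?thesis using sg_0[OF sg] by simp
qed

lemma gen_func:
  assumes g: "generates G D E" and psi: "bounded_clin (\<psi> :: 'a::chilbert \<Rightarrow> complex)"
    and eig: "\<forall>y\<in>D. \<psi> (G y) = c * \<psi> y" and y: "y \<in> D" and t: "0 \<le> t"
  shows "\<psi> (E t y) = exp (c * of_real t) * \<psi> y"
proof (cases "t = 0")
  case True
  then show ?thesis using sg_0[OF gen_sg[OF g]] by simp
next
  case False
  then have t0: "0 < t" using t by simp
  have sg: "c0_semigroup E" using gen_sg[OF g] .
  have "\<psi> (E t y) = scaleC (exp (c * of_real t)) (\<psi> (E 0 y))"
  proof (rule ode_scaleC[OF t0, where f="\<lambda>s. \<psi> (E s y)"])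
    show "continuous_on {0..t} (\<lambda>s. \<psi> (E s y))"
      by (rule continuous_on_compose2[OF bounded_clin_cont[OF psi] continuous_on_subset[OF sg_cont[OF sg]]]) auto
    fix s assume s: "s \<in> {0<..<t}"
    have "((\<lambda>s. E s y) has_vector_derivative E s (G y)) (at s)" using gen_deriv[OF g y] s by simp
    then have "((\<lambda>s. \<psi> (E s y)) has_vector_derivative \<psi> (E s (G y))) (at s)"
      by (rule bounded_linear.has_vector_derivative[OF bounded_clin_linear[OF psi]])
    moreover have "\<psi> (E s (G y)) = c * \<psi> (E s y)"
    proof -
      have "E s y \<in> D \<and> G (E s y) = E s (G y)" using gen_inv[OF g y] s by simp
      then show ?thesis using eig by metis
    qed
    ultimately show "((\<lambda>s. \<psi> (E s y)) has_vector_derivative scaleC c (\<psi> (E s y))) (at s)" by simp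
  qed (use t in auto)
  then show ?thesis using sg_0[OF sg] by simp
qed

section \<open>Riesz bases\<close>

definition fs :: "(nat \<Rightarrow> 'a::chilbert) \<Rightarrow> (nat \<Rightarrow> complex) \<Rightarrow> nat \<Rightarrow> 'a" where
  "fs phi \<alpha> N = (\<Sum>n<N. scaleC (\<alpha> n) (phi n))"

lemma fs_add: "fs phi (\<lambda>n. \<alpha> n + \<beta> n) N = fs phi \<alpha> N + fs phi \<beta> N"
  by (simp add: fs_def scaleC_add_left sum.distrib)

lemma fs_scale: "fs phi (\<lambda>n. c * \<alpha> n) N = scaleC c (fs phi \<alpha> N)"
  by (simp add: fs_def scaleC_sum_right scaleC_scaleC)

lemma fs_diff: "fs phi (\<lambda>n. \<alpha> n - \<beta> n) N = fs phi \<alpha> N - fs phi \<beta> N"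
  by (simp add: fs_def scaleC_diff_left sum_subtractf)

lemma fs_lift: "\<forall>n\<ge>N. \<alpha> n = 0 \<Longrightarrow> N \<le> K \<Longrightarrow> fs phi \<alpha> K = fs phi \<alpha> N"
  unfolding fs_def by (rule sum.mono_neutral_right) auto

lemma fs_apply: "bounded_clin g \<Longrightarrow> g (fs phi \<alpha> N) = (\<Sum>n<N. scaleC (\<alpha> n) (g (phi n)))"
  by (simp add: fs_def bounded_clin_sum bounded_clin_scaleC)

lemma fs_zext: "fs phi \<alpha> N = fs phi (\<lambda>n. if n < N then \<alpha> n else 0) N"
  unfolding fs_def by (rule sum.cong) auto

definition Vs :: "(nat \<Rightarrow> 'a::chilbert) \<Rightarrow> 'a set" where
  "Vs phi = {fs phi \<alpha> N | \<alpha> N. True}"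

lemma rb_dense: "riesz_basis phi \<Longrightarrow> closure (Vs phi) = UNIV"
  unfolding riesz_basis_def Vs_def fs_def by blast

lemma rb_bounds: "riesz_basis phi \<Longrightarrow> \<exists>m M. 0 < m \<and> 0 < M \<and> (\<forall>\<alpha> N. m * (\<Sum>n<N. (cmod (\<alpha> n))\<^sup>2) \<le> (norm (fs phi \<alpha> N))\<^sup>2
              \<and> (norm (fs phi \<alpha> N))\<^sup>2 \<le> M * (\<Sum>n<N. (cmod (\<alpha> n))\<^sup>2))"
  unfolding riesz_basis_def fs_def by blast

lemma Vs_supp: "x \<in> Vs phi \<Longrightarrow> \<exists>\<alpha> N. (\<forall>n\<ge>N. \<alpha> n = 0) \<and> x = fs phi \<alpha> N"
proof -
  assume "x \<in> Vs phi"
  then obtain \<alpha> N where x: "x = fs phi \<alpha> N" unfolding Vs_def by blast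
  then show ?thesis using fs_zext[of phi \<alpha> N] by (intro exI[of _ "\<lambda>n. if n < N then \<alpha> n else 0"] exI[of _ N]) auto
qed

lemma Vs_pair: "x \<in> Vs phi \<Longrightarrow> y \<in> Vs phi \<Longrightarrow> \<exists>\<alpha> \<beta> N. (\<forall>n\<ge>N. \<alpha> n = 0) \<and> (\<forall>n\<ge>N. \<beta> n = 0) \<and> x = fs phi \<alpha> N \<and> y = fs phi \<beta> N"
proof -
  assume "x \<in> Vs phi" "y \<in> Vs phi"
  then obtain \<alpha> N \<beta> N' where a: "\<forall>n\<ge>N. \<alpha> n = 0" "x = fs phi \<alpha> N" and b: "\<forall>n\<ge>N'. \<beta> n = 0" "y = fs phi \<beta> N'"
    using Vs_supp by metis
  define K where "K = max N N'"
  have "x = fs phi \<alpha> K" using a fs_lift[of N \<alpha> K phi] by (simp add: K_def)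
  moreover have "y = fs phi \<beta> K" using b fs_lift[of N' \<beta> K phi] by (simp add: K_def)
  moreover have "\<forall>n\<ge>K. \<alpha> n = 0" "\<forall>n\<ge>K. \<beta> n = 0" using a b by (auto simp: K_def)
  ultimately show ?thesis by blast
qed

lemma Vs_sub: "csubspace (Vs phi)"
  unfolding csubspace_def
proof (intro conjI ballI allI)
  show "0 \<in> Vs phi" unfolding Vs_def by (rule CollectI, rule exI[of _ "\<lambda>_. 0"], rule exI[of _ 0]) (simp add: fs_def)
next
  fix x y assume "x \<in> Vs phi" "y \<in> Vs phi"
  then obtain \<alpha> \<beta> K where "x = fs phi \<alpha> K" "y = fs phi \<beta> K" using Vs_pair by blast
  then have "x + y = fs phi (\<lambda>n. \<alpha> n + \<beta> n) K" by (simp add: fs_add)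
  then show "x + y \<in> Vs phi" unfolding Vs_def by blast
next
  fix c x assume "x \<in> Vs phi"
  then obtain \<alpha> N where x: "x = fs phi \<alpha> N" unfolding Vs_def by blast
  then have "scaleC c x = fs phi (\<lambda>n. c * \<alpha> n) N" by (simp add: fs_scale)
  then show "scaleC c x \<in> Vs phi" unfolding Vs_def by blast
qed

lemma rb_unique:
  assumes rb: "riesz_basis phi" and a: "\<forall>n\<ge>N. \<alpha> n = 0" and b: "\<forall>n\<ge>N. \<beta> n = 0"
    and eq: "fs phi \<alpha> N = fs phi \<beta> N"
  shows "\<alpha> = \<beta>"
proof
  fix k
  obtain m M where mM: "0 < m" "\<forall>\<alpha> N. m * (\<Sum>n<N. (cmod (\<alpha> n))\<^sup>2) \<le> (norm (fs phi \<alpha> N))\<^sup>2"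
    using rb_bounds[OF rb] by blast
  have "fs phi (\<lambda>n. \<alpha> n + (-1) * \<beta> n) N = 0" using eq fs_diff[of phi \<alpha> \<beta> N] by simp
  then have "m * (\<Sum>n<N. (cmod (\<alpha> n + (-1) * \<beta> n))\<^sup>2) \<le> 0" using mM(2)[rule_format, of "\<lambda>n. \<alpha> n + (-1) * \<beta> n" N] by simp
  then have "(\<Sum>n<N. (cmod (\<alpha> n + (-1) * \<beta> n))\<^sup>2) \<le> 0" using mM(1) by (simp add: mult_le_0_iff)
  then have "(\<Sum>n<N. (cmod (\<alpha> n + (-1) * \<beta> n))\<^sup>2) = 0" by (meson antisym sum_nonneg zero_le_power2)
  then have "\<forall>n\<in>{..<N}. (cmod (\<alpha> n + (-1) * \<beta> n))\<^sup>2 = 0" by (simp add: sum_nonneg_eq_0_iff)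
  then show "\<alpha> k = \<beta> k" using a b by (cases "k < N") auto
qed


definition rep :: "(nat \<Rightarrow> 'a::chilbert) \<Rightarrow> 'a \<Rightarrow> (nat \<Rightarrow> complex) \<times> nat" where
  "rep phi x = (SOME p. (\<forall>n\<ge>snd p. fst p n = 0) \<and> x = fs phi (fst p) (snd p))"

lemma rep_fs:
  assumes rb: "riesz_basis phi" and a: "\<forall>n\<ge>N. \<alpha> n = 0"
  shows "fst (rep phi (fs phi \<alpha> N)) = \<alpha>"
proof -
  define p where "p = rep phi (fs phi \<alpha> N)"
  have "(\<forall>n\<ge>snd p. fst p n = 0) \<and> fs phi \<alpha> N = fs phi (fst p) (snd p)"
    unfolding p_def rep_def by (rule someI[of _ "(\<alpha>, N)"]) (use a in auto)
  then have p1: "\<forall>n\<ge>snd p. fst p n = 0" and p2: "fs phi \<alpha> N = fs phi (fst p) (snd p)" by auto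
  define K where "K = max N (snd p)"
  have "fs phi \<alpha> K = fs phi (fst p) K"
    using p2 fs_lift[of N \<alpha> K phi] fs_lift[of "snd p" "fst p" K phi] a p1 by (simp add: K_def)
  moreover have "\<forall>n\<ge>K. \<alpha> n = 0" "\<forall>n\<ge>K. fst p n = 0" using a p1 by (auto simp: K_def)
  ultimately have "\<alpha> = fst p" using rb_unique[OF rb] by blast
  then show ?thesis by (simp add: p_def)
qed

lemma rep_fs2:
  assumes rb: "riesz_basis phi" and a: "\<forall>n\<ge>N. \<alpha> n = 0"
    and that: "\<forall>n\<ge>N. \<beta> n = 0" "\<forall>n. \<alpha> n = 0 \<longrightarrow> \<beta> n = 0"
  shows "fs phi \<beta> (snd (rep phi (fs phi \<alpha> N))) = fs phi \<beta> N"
proof -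
  define p where "p = rep phi (fs phi \<alpha> N)"
  have "(\<forall>n\<ge>snd p. fst p n = 0) \<and> fs phi \<alpha> N = fs phi (fst p) (snd p)"
    unfolding p_def rep_def by (rule someI[of _ "(\<alpha>, N)"]) (use a in auto)
  then have p1: "\<forall>n\<ge>snd p. \<alpha> n = 0" using rep_fs[OF rb a] by (simp add: p_def)
  then have b1: "\<forall>n\<ge>snd p. \<beta> n = 0" using that by blast
  define K where "K = max N (snd p)"
  have "fs phi \<beta> K = fs phi \<beta> N" using fs_lift[of N \<beta> K phi] that by (simp add: K_def)
  moreover have "fs phi \<beta> K = fs phi \<beta> (snd p)" using fs_lift[of "snd p" \<beta> K phi] b1 by (simp add: K_def)
  ultimately show ?thesis by (simp add: p_def)
qed

lemma fs_delta: "fs phi (\<lambda>n. if n = j then c else 0) (Suc j) = scaleC c (phi j)"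
proof -
  have "fs phi (\<lambda>n. if n = j then c else 0) (Suc j) = (\<Sum>n<Suc j. if n = j then scaleC c (phi j) else 0)"
    unfolding fs_def by (rule sum.cong) auto
  also have "\<dots> = scaleC c (phi j)" by (simp add: sum.delta')
  finally show ?thesis .
qed

lemma sq_bound: "(norm a)\<^sup>2 \<le> c\<^sup>2 * (norm b)\<^sup>2 \<Longrightarrow> 0 \<le> c \<Longrightarrow> norm a \<le> c * norm b"
  by (rule power2_le_imp_le) (simp_all add: power_mult_distrib)

lemma rb_diag:
  assumes rb: "riesz_basis phi"
  shows "\<exists>K>0. \<forall>C d. 0 \<le> C \<longrightarrow> (\<forall>n. cmod (d n) \<le> C) \<longrightarrow>
     (\<exists>g. bounded_clin g \<and> (\<forall>j. g (phi j) = scaleC (d j) (phi j)) \<and> (\<forall>x. norm (g x) \<le> K * C * norm x))"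
proof -
  obtain m0 M0 where mM: "0 < m0" "0 < M0" "\<forall>\<alpha> N. m0 * (\<Sum>n<N. (cmod (\<alpha> n))\<^sup>2) \<le> (norm (fs phi \<alpha> N))\<^sup>2
              \<and> (norm (fs phi \<alpha> N))\<^sup>2 \<le> M0 * (\<Sum>n<N. (cmod (\<alpha> n))\<^sup>2)"
    using rb_bounds[OF rb] by blast
  define K where "K = sqrt (M0 / m0)"
  have K: "K > 0" using mM by (simp add: K_def)
  have "\<exists>g. bounded_clin g \<and> (\<forall>j. g (phi j) = scaleC (d j) (phi j)) \<and> (\<forall>x. norm (g x) \<le> K * C * norm x)"
    if C: "0 \<le> C" and dC: "\<forall>n. cmod (d n) \<le> C" for C d
  proof -
    define f where "f x = fs phi (\<lambda>n. d n * fst (rep phi x) n) (snd (rep phi x))" for x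
    have fsupp: "f (fs phi \<alpha> N) = fs phi (\<lambda>n. d n * \<alpha> n) N" if a: "\<forall>n\<ge>N. \<alpha> n = 0" for \<alpha> N
      unfolding f_def rep_fs[OF rb a] by (rule rep_fs2[OF rb a]) (use a in auto)
    have fadd: "\<forall>x\<in>Vs phi. \<forall>y\<in>Vs phi. f (x + y) = f x + f y"
    proof (intro ballI)
      fix x y assume "x \<in> Vs phi" "y \<in> Vs phi"
      then obtain \<alpha> \<beta> N where ab: "\<forall>n\<ge>N. \<alpha> n = 0" "\<forall>n\<ge>N. \<beta> n = 0" "x = fs phi \<alpha> N" "y = fs phi \<beta> N"
        using Vs_pair by blast
      have "x + y = fs phi (\<lambda>n. \<alpha> n + \<beta> n) N" using ab by (simp add: fs_add)
      moreover have "\<forall>n\<ge>N. \<alpha> n + \<beta> n = 0" using ab by simp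
      ultimately have "f (x + y) = fs phi (\<lambda>n. d n * (\<alpha> n + \<beta> n)) N" using fsupp by simp
      also have "\<dots> = fs phi (\<lambda>n. d n * \<alpha> n) N + fs phi (\<lambda>n. d n * \<beta> n) N"
        using fs_add[of phi "\<lambda>n. d n * \<alpha> n" "\<lambda>n. d n * \<beta> n" N] by (simp add: distrib_left)
      finally show "f (x + y) = f x + f y" using ab fsupp by simp
    qed
    have fsc: "\<forall>c. \<forall>x\<in>Vs phi. f (scaleC c x) = scaleC c (f x)"
    proof (intro allI ballI)
      fix c x assume "x \<in> Vs phi"
      then obtain \<alpha> N where a: "\<forall>n\<ge>N. \<alpha> n = 0" "x = fs phi \<alpha> N" using Vs_supp by blast
      have "scaleC c x = fs phi (\<lambda>n. c * \<alpha> n) N" using a by (simp add: fs_scale)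
      moreover have "\<forall>n\<ge>N. c * \<alpha> n = 0" using a by simp
      ultimately have "f (scaleC c x) = fs phi (\<lambda>n. d n * (c * \<alpha> n)) N" using fsupp by simp
      also have "\<dots> = scaleC c (fs phi (\<lambda>n. d n * \<alpha> n) N)"
        using fs_scale[of phi c "\<lambda>n. d n * \<alpha> n" N] by (simp add: mult.left_commute)
      finally show "f (scaleC c x) = scaleC c (f x)" using a fsupp by simp
    qed
    have fbd: "\<forall>x\<in>Vs phi. norm (f x) \<le> (K * C) * norm x"
    proof
      fix x assume "x \<in> Vs phi"
      then obtain \<alpha> N where a: "\<forall>n\<ge>N. \<alpha> n = 0" "x = fs phi \<alpha> N" using Vs_supp by blast
      have "(norm (f x))\<^sup>2 = (norm (fs phi (\<lambda>n. d n * \<alpha> n) N))\<^sup>2" using a fsupp by simp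
      also have "\<dots> \<le> M0 * (\<Sum>n<N. (cmod (d n * \<alpha> n))\<^sup>2)" using mM(3) by blast
      also have "\<dots> \<le> M0 * (\<Sum>n<N. C\<^sup>2 * (cmod (\<alpha> n))\<^sup>2)"
      proof (intro mult_left_mono sum_mono)
        fix n assume "n \<in> {..<N}"
        have "cmod (d n) * cmod (\<alpha> n) \<le> C * cmod (\<alpha> n)" using dC by (simp add: mult_right_mono)
        then have "(cmod (d n) * cmod (\<alpha> n))\<^sup>2 \<le> (C * cmod (\<alpha> n))\<^sup>2"
          by (intro power_mono) auto
        then show "(cmod (d n * \<alpha> n))\<^sup>2 \<le> C\<^sup>2 * (cmod (\<alpha> n))\<^sup>2" by (simp add: norm_mult power_mult_distrib)
      qed (use mM in auto)
      also have "\<dots> = (M0 / m0) * C\<^sup>2 * (m0 * (\<Sum>n<N. (cmod (\<alpha> n))\<^sup>2))"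
        using mM by (simp add: sum_distrib_left[symmetric] field_simps)
      also have "\<dots> \<le> (M0 / m0) * C\<^sup>2 * (norm x)\<^sup>2"
        using mM a by (intro mult_left_mono) auto
      also have "\<dots> = (K * C)\<^sup>2 * (norm x)\<^sup>2" using mM by (simp add: K_def power_mult_distrib)
      finally show "norm (f x) \<le> (K * C) * norm x" by (rule sq_bound) (use K C in auto)
    qed
    obtain g where g: "bounded_clin g" "\<forall>x\<in>Vs phi. g x = f x" "\<forall>x. norm (g x) \<le> (K * C) * norm x"
      using ext_op[OF rb_dense[OF rb] Vs_sub fadd fsc fbd] K C by auto
    have "g (phi j) = scaleC (d j) (phi j)" for j
    proof -
      have "phi j = fs phi (\<lambda>n. if n = j then 1 else 0) (Suc j)" using fs_delta[of phi j 1] by (simp add: scaleC_one)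
      moreover have "fs phi (\<lambda>n. if n = j then 1 else 0) (Suc j) \<in> Vs phi" unfolding Vs_def by blast
      ultimately have "g (phi j) = f (fs phi (\<lambda>n. if n = j then 1 else 0) (Suc j))" using g by metis
      also have "\<dots> = fs phi (\<lambda>n. d n * (if n = j then 1 else 0)) (Suc j)" by (rule fsupp) auto
      also have "\<dots> = fs phi (\<lambda>n. if n = j then d j else 0) (Suc j)" by (rule arg_cong[where f="\<lambda>a. fs phi a (Suc j)"]) auto
      also have "\<dots> = scaleC (d j) (phi j)" by (rule fs_delta)
      finally show ?thesis .
    qed
    then show ?thesis using g by auto
  qed
  then show ?thesis using K by blast
qed


lemma rb_psi1:
  assumes rb: "riesz_basis phi"
  shows "\<exists>g. bounded_clin (g :: 'a::chilbert \<Rightarrow> complex) \<and> (\<forall>j. g (phi j) = (if k = j then 1 else 0))"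
proof -
  obtain m0 M0 where mM: "0 < m0" "0 < M0" "\<forall>\<alpha> N. m0 * (\<Sum>n<N. (cmod (\<alpha> n))\<^sup>2) \<le> (norm (fs phi \<alpha> N))\<^sup>2
              \<and> (norm (fs phi \<alpha> N))\<^sup>2 \<le> M0 * (\<Sum>n<N. (cmod (\<alpha> n))\<^sup>2)"
    using rb_bounds[OF rb] by blast
  define K where "K = sqrt (1 / m0)"
  have K: "K > 0" using mM by (simp add: K_def)
  define f where "f x = fst (rep phi x) k" for x
  have fsupp: "f (fs phi \<alpha> N) = \<alpha> k" if a: "\<forall>n\<ge>N. \<alpha> n = 0" for \<alpha> N
    unfolding f_def rep_fs[OF rb a] ..
  have fadd: "\<forall>x\<in>Vs phi. \<forall>y\<in>Vs phi. f (x + y) = f x + f y"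
  proof (intro ballI)
    fix x y assume "x \<in> Vs phi" "y \<in> Vs phi"
    then obtain \<alpha> \<beta> N where ab: "\<forall>n\<ge>N. \<alpha> n = 0" "\<forall>n\<ge>N. \<beta> n = 0" "x = fs phi \<alpha> N" "y = fs phi \<beta> N"
      using Vs_pair by blast
    have "x + y = fs phi (\<lambda>n. \<alpha> n + \<beta> n) N" using ab by (simp add: fs_add)
    moreover have "\<forall>n\<ge>N. \<alpha> n + \<beta> n = 0" using ab by simp
    ultimately show "f (x + y) = f x + f y" using fsupp ab by simp
  qed
  have fsc: "\<forall>c. \<forall>x\<in>Vs phi. f (scaleC c x) = scaleC c (f x)"
  proof (intro allI ballI)
    fix c x assume "x \<in> Vs phi"
    then obtain \<alpha> N where a: "\<forall>n\<ge>N. \<alpha> n = 0" "x = fs phi \<alpha> N" using Vs_supp by blast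
    have "scaleC c x = fs phi (\<lambda>n. c * \<alpha> n) N" using a by (simp add: fs_scale)
    moreover have "\<forall>n\<ge>N. c * \<alpha> n = 0" using a by simp
    ultimately show "f (scaleC c x) = scaleC c (f x)" using fsupp a by simp
  qed
  have fbd: "\<forall>x\<in>Vs phi. norm (f x) \<le> K * norm x"
  proof
    fix x assume "x \<in> Vs phi"
    then obtain \<alpha> N where a: "\<forall>n\<ge>N. \<alpha> n = 0" "x = fs phi \<alpha> N" using Vs_supp by blast
    have "(cmod (\<alpha> k))\<^sup>2 \<le> (\<Sum>n<N. (cmod (\<alpha> n))\<^sup>2)"
    proof (cases "k < N")
      case True
      then show ?thesis by (intro member_le_sum) auto
    next
      case False
      then show ?thesis using a by (simp add: sum_nonneg)
    qed
    also have "\<dots> = (1 / m0) * (m0 * (\<Sum>n<N. (cmod (\<alpha> n))\<^sup>2))" using mM by simp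
    also have "\<dots> \<le> (1 / m0) * (norm x)\<^sup>2" using mM a by (intro mult_left_mono) auto
    also have "\<dots> = K\<^sup>2 * (norm x)\<^sup>2" using mM by (simp add: K_def)
    finally have "(norm (f x))\<^sup>2 \<le> K\<^sup>2 * (norm x)\<^sup>2" using fsupp a by simp
    then show "norm (f x) \<le> K * norm x" by (rule sq_bound) (use K in auto)
  qed
  obtain g where g: "bounded_clin g" "\<forall>x\<in>Vs phi. g x = f x"
    using ext_op[OF rb_dense[OF rb] Vs_sub fadd fsc fbd] K by auto
  have "g (phi j) = (if k = j then 1 else 0)" for j
  proof -
    have "phi j = fs phi (\<lambda>n. if n = j then 1 else 0) (Suc j)" using fs_delta[of phi j 1] by (simp add: scaleC_one)
    moreover have "fs phi (\<lambda>n. if n = j then 1 else 0) (Suc j) \<in> Vs phi" unfolding Vs_def by blast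
    ultimately have "g (phi j) = f (fs phi (\<lambda>n. if n = j then 1 else 0) (Suc j))" using g by metis
    also have "\<dots> = (if k = j then 1 else 0)" by (subst fsupp) auto
    finally show ?thesis .
  qed
  then show ?thesis using g by auto
qed

lemma rb_psi:
  assumes rb: "riesz_basis phi"
  shows "\<exists>\<psi>. \<forall>k. bounded_clin (\<psi> k :: 'a::chilbert \<Rightarrow> complex) \<and> (\<forall>j. \<psi> k (phi j) = (if k = j then 1 else 0))"
proof -
  have "\<forall>k. \<exists>g. bounded_clin (g :: 'a::chilbert \<Rightarrow> complex) \<and> (\<forall>j. g (phi j) = (if k = j then 1 else 0))"
    using rb_psi1[OF rb] by blast
  then show ?thesis by (rule choice)
qed

lemma dense_eq_phi:
  assumes rb: "riesz_basis phi" and g: "bounded_clin (g1::'a::chilbert \<Rightarrow> 'b::chilbert)" "bounded_clin g2"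
    and eq: "\<forall>j. g1 (phi j) = g2 (phi j)"
  shows "g1 = g2"
proof (rule dense_eq[OF rb_dense[OF rb] g])
  show "\<forall>x\<in>Vs phi. g1 x = g2 x"
  proof
    fix x assume "x \<in> Vs phi"
    then obtain \<alpha> N where "x = fs phi \<alpha> N" unfolding Vs_def by blast
    then show "g1 x = g2 x" using fs_apply[OF g(1)] fs_apply[OF g(2)] eq by simp
  qed
qed

lemma bounded_clin_sum_fun:
  "(\<And>n. bounded_clin (f n :: 'a::chilbert \<Rightarrow> 'b::chilbert)) \<Longrightarrow> bounded_clin (\<lambda>x. \<Sum>n<(N::nat). f n x)"
proof (induction N)
  case 0
  then show ?case using bounded_clin_const0 by simp
next
  case (Suc N)
  then show ?case using bounded_clin_plus[OF Suc.IH[OF Suc.prems] Suc.prems[of N]] by simp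
qed

lemma rb_complete:
  assumes rb: "riesz_basis phi"
    and psi: "\<forall>k. bounded_clin (\<psi> k :: 'a::chilbert \<Rightarrow> complex) \<and> (\<forall>j. \<psi> k (phi j) = (if k = j then 1 else 0))"
    and z: "\<forall>k. \<psi> k x = 0"
  shows "x = 0"
proof -
  obtain K where K: "K > 0" "\<forall>C d. 0 \<le> C \<longrightarrow> (\<forall>n. cmod (d n) \<le> C) \<longrightarrow>
     (\<exists>g. bounded_clin g \<and> (\<forall>j. g (phi j) = scaleC (d j) (phi j)) \<and> (\<forall>x. norm (g x) \<le> K * C * norm x))"
    using rb_diag[OF rb] by blast
  have PN: "\<exists>g. bounded_clin g \<and> (\<forall>j. g (phi j) = scaleC (if j < N then 1 else 0) (phi j)) \<and> (\<forall>x. norm (g x) \<le> K * norm x)" for N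
    using K(2)[rule_format, of 1 "\<lambda>j. if j < N then 1 else 0"] by simp
  have main: "norm x \<le> (1 + K) * norm (x - y)" if y: "y \<in> Vs phi" for y
  proof -
    obtain \<alpha> N where yN: "y = fs phi \<alpha> N" using y unfolding Vs_def by blast
    obtain g where g: "bounded_clin g" "\<forall>j. g (phi j) = scaleC (if j < N then 1 else 0) (phi j)" "\<forall>x. norm (g x) \<le> K * norm x"
      using PN by blast
    have gx: "g = (\<lambda>x. \<Sum>n<N. scaleC (\<psi> n x) (phi n))"
    proof (rule dense_eq_phi[OF rb g(1)])
      show "bounded_clin (\<lambda>x. \<Sum>n<N. scaleC (\<psi> n x) (phi n))"
        by (rule bounded_clin_sum_fun) (use bounded_clin_rank1 psi in blast)
      show "\<forall>j. g (phi j) = (\<Sum>n<N. scaleC (\<psi> n (phi j)) (phi n))"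
      proof
        fix j
        have "(\<Sum>n<N. scaleC (\<psi> n (phi j)) (phi n)) = (\<Sum>n<N. if n = j then phi j else 0)"
          using psi by (intro sum.cong) (auto simp: scaleC_one)
        also have "\<dots> = scaleC (if j < N then 1 else 0) (phi j)" by (simp add: sum.delta' scaleC_one)
        finally show "g (phi j) = (\<Sum>n<N. scaleC (\<psi> n (phi j)) (phi n))" using g by simp
      qed
    qed
    have g0: "g x = 0" using z gx by simp
    have gy: "g y = y" unfolding yN fs_apply[OF g(1)] using g(2) by (simp add: fs_def scaleC_scaleC scaleC_one)
    have "x = (x - y) - g (x - y)" using g0 gy bounded_clin_diff[OF g(1)] by simp
    then have "norm x \<le> norm (x - y) + norm (g (x - y))" by (metis norm_triangle_ineq4)
    also have "\<dots> \<le> norm (x - y) + K * norm (x - y)" using g(3) by simp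
    finally show ?thesis by (simp add: distrib_right)
  qed
  show ?thesis
  proof (rule ccontr)
    assume "x \<noteq> 0"
    then have e: "norm x / (2 * (1 + K)) > 0" using K by simp
    have "x \<in> closure (Vs phi)" using rb_dense[OF rb] by simp
    then obtain y where y: "y \<in> Vs phi" "dist y x < norm x / (2 * (1 + K))"
      using closure_approachable e by blast
    have "norm x \<le> (1 + K) * norm (x - y)" using main[OF y(1)] .
    also have "\<dots> \<le> (1 + K) * (norm x / (2 * (1 + K)))"
      using y(2) K by (intro mult_left_mono) (auto simp: dist_norm norm_minus_commute)
    also have "\<dots> = norm x / 2" using K(1) by (simp add: field_simps)
    finally show False using \<open>x \<noteq> 0\<close> by simp
  qed
qed

lemma expq: "((\<lambda>h::real. (1 / h) *\<^sub>R (exp (c * of_real h) - 1)) \<longlongrightarrow> (c::complex)) (at_right 0)"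
proof (cases "c = 0")
  case True
  then show ?thesis by simp
next
  case False
  have lim: "((\<lambda>z::complex. (exp z - 1) / z) \<longlongrightarrow> 1) (at 0)" by (rule lim_exp_minus_1)
  have fl: "filterlim (\<lambda>h::real. c * of_real h) (at 0) (at_right 0)"
  proof (rule filterlim_atI)
    show "((\<lambda>h::real. c * of_real h) \<longlongrightarrow> 0) (at_right 0)"
      by (intro tendsto_eq_intros) (auto intro: tendsto_ident_at)
    show "\<forall>\<^sub>F h in at_right 0. c * complex_of_real h \<noteq> 0"
      using False unfolding eventually_at_right_field by (intro exI[of _ 1]) auto
  qed
  have "((\<lambda>h::real. (exp (c * of_real h) - 1) / (c * of_real h)) \<longlongrightarrow> 1) (at_right 0)"
    using filterlim_compose[OF lim fl] by (simp add: o_def)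
  then have "((\<lambda>h::real. c * ((exp (c * of_real h) - 1) / (c * of_real h))) \<longlongrightarrow> c * 1) (at_right 0)"
    by (rule tendsto_mult_left)
  moreover have "eventually (\<lambda>h. c * ((exp (c * of_real h) - 1) / (c * of_real h)) = (1 / h) *\<^sub>R (exp (c * of_real h) - 1)) (at_right 0)"
    unfolding eventually_at_right_field using False
    by (intro exI[of _ 1]) (auto simp: scaleR_conv_of_real field_simps)
  ultimately show ?thesis using Lim_transform_eventually by fastforce
qed

lemma exp_unbounded: "0 < (a::real) \<Longrightarrow> \<exists>t\<ge>0. exp (a * t) > M"
proof -
  assume a: "0 < a"
  define t where "t = (\<bar>M\<bar> + 1) / a"
  have t: "t \<ge> 0" using a by (simp add: t_def)
  have "a * t = \<bar>M\<bar> + 1" using a by (simp add: t_def)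
  then have "exp (a * t) \<ge> 1 + (\<bar>M\<bar> + 1)" using exp_ge_add_one_self[of "a * t"] by simp
  then have "exp (a * t) > M" by linarith
  then show ?thesis using t by blast
qed

lemma in_resolvent:
  fixes Op R :: "'a::chilbert \<Rightarrow> 'a"
  assumes lr: "\<And>w. scaleC z (R w) - Op (R w) = w" and rl: "\<And>y. R (scaleC z y - Op y) = y"
    and R: "bounded_clin R"
  shows "z \<in> resolvent_set Op \<and> resolvent z Op = R"
proof -
  define L where "L = (\<lambda>x. scaleC z x - Op x)"
  have "bij L" by (rule o_bij[of R]) (auto simp: L_def lr rl)
  moreover have "inv L = R" by (rule inv_equality) (auto simp: L_def lr rl)
  ultimately show ?thesis using R unfolding resolvent_set_def resolvent_def L_def by auto
qed

lemma integral_exp: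
  fixes c :: complex
  assumes c: "c \<noteq> 0" and t: "0 \<le> t"
  shows "integral {0..t} (\<lambda>r. exp (c * of_real r)) = (exp (c * of_real t) - 1) / c"
proof -
  have "((\<lambda>r. exp (c * of_real r)) has_integral ((\<lambda>r. exp (c * of_real r) / c) t - (\<lambda>r. exp (c * of_real r) / c) 0)) {0..t}"
  proof (rule fundamental_theorem_of_calculus[OF t])
    fix x assume "x \<in> {0..t}"
    have "((\<lambda>z. exp (c * z) / c) has_field_derivative exp (c * of_real x)) (at (of_real x))"
      using c by (auto intro!: derivative_eq_intros)
    then show "((\<lambda>r. exp (c * of_real r) / c) has_vector_derivative exp (c * of_real x)) (at x within {0..t})"
      by (rule has_vector_derivative_real_field)
  qed
  then show ?thesis using c by (simp add: integral_unique diff_divide_distrib)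
qed

theorem mainTheorem11:
  fixes A :: "'a::chilbert \<Rightarrow> 'a" and D :: "'a set" and T :: "real \<Rightarrow> 'a \<Rightarrow> 'a"
    and lam :: "nat \<Rightarrow> complex" and phi :: "nat \<Rightarrow> 'a"
    and B :: "complex \<Rightarrow> 'a" and F :: "'a \<Rightarrow> complex" and \<tau> :: real
  assumes RS: "riesz_spectral A D lam phi"
    and gen: "generates A D T"
    and fin: "finite {n. 0 < Re (lam n)}"
    and B: "bounded_clin B"
    and F: "bounded_clin F"
    and closed_loop: "\<exists>TF. generates (\<lambda>x. A x + B (F x)) D TF
                         \<and> (\<exists>M. \<forall>t\<ge>0. \<forall>x. norm (TF t x) \<le> M * norm x)"
    and tau: "\<tau> > 0"
    and i: "\<forall>l::int. \<forall>n m. l \<noteq> 0 \<and> 0 < Re (lam n) \<and> 0 < Re (lam m) \<longrightarrow>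
              complex_of_real \<tau> * (lam n - lam m) \<noteq> 2 * of_int l * complex_of_real pi * \<i>"
    and ii: "\<forall>z\<in>resolvent_set (T \<tau>). 1 < cmod z \<longrightarrow>
              (\<lambda>u. F (resolvent z (T \<tau>) (Sop T B \<tau> u))) \<noteq> (\<lambda>u. u)"
  shows "{z. 1 < cmod z} \<subseteq> resolvent_set (Delta T B F \<tau>)"
proof -
  have rb: "riesz_basis phi" and phiD: "\<And>n. phi n \<in> D" and phi0: "\<And>n. phi n \<noteq> 0"
    and Aphi: "\<And>n. A (phi n) = scaleC (lam n) (phi n)" and injl: "inj lam"
    using RS unfolding riesz_spectral_def by auto
  have sg: "c0_semigroup T" using gen_sg[OF gen] .
  obtain TF M where TF: "generates (\<lambda>x. A x + B (F x)) D TF" and M: "\<forall>t\<ge>0. \<forall>x. norm (TF t x) \<le> M * norm x"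
    using closed_loop by blast
  obtain \<psi> :: "nat \<Rightarrow> 'a \<Rightarrow> complex" where psi: "\<forall>k. bounded_clin (\<psi> k) \<and> (\<forall>j. \<psi> k (phi j) = (if k = j then 1 else 0))"
    using rb_psi[OF rb] by blast
  have psib: "bounded_clin (\<psi> k)" for k using psi by blast
  have psiphi: "\<psi> k (phi j) = (if k = j then 1 else 0)" for k j using psi by blast
  define \<mu> where "\<mu> m = exp (lam m * of_real \<tau>)" for m
  have bT: "bounded_clin (T r)" if "0 \<le> r" for r using sg_bcl[OF sg that] .
  have bTt: "bounded_clin (T \<tau>)" using bT tau by simp
  have Tphi_all: "T r (phi j) = scaleC (exp (lam j * of_real r)) (phi j)" if "0 \<le> r" for r j
    using gen_eig[OF gen phiD Aphi that] .
  have Tphi: "T \<tau> (phi j) = scaleC (\<mu> j) (phi j)" for j using Tphi_all tau by (simp add: \<mu>_def)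
  have psiT: "\<psi> k (T r x) = exp (lam k * of_real r) * \<psi> k x" if r: "0 \<le> r" for k r x
  proof -
    have "(\<lambda>x. \<psi> k (T r x)) = (\<lambda>x. scaleC (exp (lam k * of_real r)) (\<psi> k x))"
    proof (rule dense_eq_phi[OF rb])
      show "bounded_clin (\<lambda>x. \<psi> k (T r x))" by (rule bounded_clin_compose[OF psib bT[OF r]])
      show "bounded_clin (\<lambda>x. scaleC (exp (lam k * of_real r)) (\<psi> k x))" by (rule bounded_clin_scale[OF psib])
      show "\<forall>j. \<psi> k (T r (phi j)) = scaleC (exp (lam k * of_real r)) (\<psi> k (phi j))"
        using Tphi_all[OF r] bounded_clin_scaleC[OF psib] psiphi by simp
    qed
    then show ?thesis by (metis scaleC_complex_simp)
  qed
  have psiA: "\<psi> k (A y) = lam k * \<psi> k y" if y: "y \<in> D" for k y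
  proof -
    have l1: "((\<lambda>h. \<psi> k ((1 / h) *\<^sub>R (T h y - y))) \<longlongrightarrow> \<psi> k (A y)) (at_right 0)"
      by (rule bounded_clin_tendsto[OF psib gen_lim[OF gen y]])
    have ev: "eventually (\<lambda>h. ((1 / h) *\<^sub>R (exp (lam k * of_real h) - 1)) * \<psi> k y = \<psi> k ((1 / h) *\<^sub>R (T h y - y))) (at_right 0)"
    proof -
      have "((1 / h) *\<^sub>R (exp (lam k * of_real h) - 1)) * \<psi> k y = \<psi> k ((1 / h) *\<^sub>R (T h y - y))" if h: "h > 0" for h
      proof -
        have l: "linear (\<psi> k)" using bounded_clin_linear[OF psib] bounded_linear.linear by blast
        have "\<psi> k ((1 / h) *\<^sub>R (T h y - y)) = (1 / h) *\<^sub>R (\<psi> k (T h y) - \<psi> k y)"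
          using l by (simp add: linear_scale linear_diff)
        also have "\<dots> = (1 / h) *\<^sub>R ((exp (lam k * of_real h) - 1) * \<psi> k y)"
          using psiT[of h k y] h by (simp add: algebra_simps)
        finally show ?thesis by (simp add: scaleR_conv_of_real)
      qed
      then show ?thesis unfolding eventually_at_right_field by (intro exI[of _ 1]) auto
    qed
    have l2: "((\<lambda>h. ((1 / h) *\<^sub>R (exp (lam k * of_real h) - 1)) * \<psi> k y) \<longlongrightarrow> lam k * \<psi> k y) (at_right 0)"
      by (rule tendsto_mult_right[OF expq])
    have l3: "((\<lambda>h. \<psi> k ((1 / h) *\<^sub>R (T h y - y))) \<longlongrightarrow> lam k * \<psi> k y) (at_right 0)"
      using Lim_transform_eventually[OF l2 ev] .
    show ?thesis using tendsto_unique[OF _ l1 l3] by simp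
  qed
  define b where "b = B 1"
  define s where "s = Sop T B \<tau> 1"
  have contTb: "continuous_on {0..\<tau>} (\<lambda>r. T r b)" by (rule continuous_on_subset[OF sg_cont[OF sg]]) auto
  have intTb: "(\<lambda>r. T r b) integrable_on {0..\<tau>}" by (rule integrable_continuous_interval[OF contTb])
  have Bu: "B u = scaleC u b" for u
    using bounded_clin_scaleC[OF B, of u 1] by (simp add: b_def)
  have SopLin: "Sop T B \<tau> u = scaleC u s" for u
  proof -
    have "Sop T B \<tau> u = integral {0..\<tau>} (\<lambda>r. scaleC u (T r b))"
      unfolding Sop_def Bu by (rule integral_cong) (simp add: bounded_clin_scaleC[OF bT])
    also have "\<dots> = integral {0..\<tau>} ((\<lambda>v. scaleC u v) \<circ> (\<lambda>r. T r b))" by (simp add: o_def)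
    also have "\<dots> = scaleC u (integral {0..\<tau>} (\<lambda>r. T r b))"
      by (rule integral_linear[OF intTb bounded_linear_scaleC_right])
    finally show ?thesis unfolding s_def Sop_def Bu by (simp add: scaleC_one)
  qed
  have psis: "\<psi> k s = \<psi> k b * ((exp (lam k * of_real \<tau>) - 1) / lam k)" if lk: "lam k \<noteq> 0" for k
  proof -
    have "\<psi> k s = \<psi> k (integral {0..\<tau>} (\<lambda>r. T r b))"
      unfolding s_def Sop_def Bu by (simp add: scaleC_one)
    also have "\<dots> = integral {0..\<tau>} (\<psi> k \<circ> (\<lambda>r. T r b))"
      by (rule integral_linear[OF intTb bounded_clin_linear[OF psib], symmetric])
    also have "\<dots> = integral {0..\<tau>} ((\<lambda>z. z * \<psi> k b) \<circ> (\<lambda>r. exp (lam k * of_real r)))"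
      by (rule integral_cong) (simp add: psiT)
    also have "\<dots> = integral {0..\<tau>} (\<lambda>r. exp (lam k * of_real r)) * \<psi> k b"
    proof (rule integral_linear[OF integrable_continuous_interval bounded_linear_mult_left])
      show "continuous_on {0..\<tau>} (\<lambda>r. exp (lam k * complex_of_real r))"
        by (intro continuous_intros)
    qed
    also have "\<dots> = \<psi> k b * ((exp (lam k * of_real \<tau>) - 1) / lam k)"
      using integral_exp[OF lk, of \<tau>] tau by simp
    finally show ?thesis .
  qed
  have nonbounded: False if "0 < Re c" "\<forall>t\<ge>0. exp (Re c * t) \<le> K" for c K
    using exp_unbounded[OF that(1), of K] that(2) by force
  have C1: "F (phi n) \<noteq> 0" if n: "0 < Re (lam n)" for n
  proof
    assume Fn: "F (phi n) = 0"
    have "(\<lambda>x. A x + B (F x)) (phi n) = scaleC (lam n) (phi n)"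
      using Fn Aphi bounded_clin_zero[OF B] by simp
    then have TFn: "TF t (phi n) = scaleC (exp (lam n * of_real t)) (phi n)" if "0 \<le> t" for t
      using gen_eig[OF TF phiD _ that] by blast
    then have "exp (Re (lam n) * t) * norm (phi n) \<le> M * norm (phi n)" if "0 \<le> t" for t
    proof -
      have "norm (TF t (phi n)) = exp (Re (lam n) * t) * norm (phi n)" using that TFn by simp
      then show ?thesis using M that by metis
    qed
    then have "exp (Re (lam n) * t) \<le> M" if "0 \<le> t" for t
      using phi0[of n] that by (simp add: mult_le_cancel_right)
    then show False using nonbounded[OF n] by blast
  qed
  have C2: "\<psi> n b \<noteq> 0" if n: "0 < Re (lam n)" for n
  proof
    assume bn: "\<psi> n b = 0"
    have eig: "\<forall>y\<in>D. \<psi> n (A y + B (F y)) = lam n * \<psi> n y"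
    proof
      fix y assume y: "y \<in> D"
      have "\<psi> n (A y + B (F y)) = \<psi> n (A y) + F y * \<psi> n b"
        using bounded_clin_add[OF psib] bounded_clin_scaleC[OF psib] Bu by simp
      then show "\<psi> n (A y + B (F y)) = lam n * \<psi> n y" using bn psiA[OF y] by simp
    qed
    obtain Kp where Kp: "Kp > 0" "\<forall>x. norm (\<psi> n x) \<le> Kp * norm x" using bounded_clin_bound[OF psib] by blast
    have "exp (Re (lam n) * t) \<le> Kp * (M * norm (phi n))" if t: "0 \<le> t" for t
    proof -
      have "\<psi> n (TF t (phi n)) = exp (lam n * of_real t) * \<psi> n (phi n)"
        using gen_func[OF TF psib _ phiD t] eig by simp
      then have "exp (Re (lam n) * t) = norm (\<psi> n (TF t (phi n)))" using psiphi by simp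
      also have "\<dots> \<le> Kp * norm (TF t (phi n))" using Kp by blast
      also have "\<dots> \<le> Kp * (M * norm (phi n))" using M t Kp by (simp add: mult_left_mono)
      finally show ?thesis .
    qed
    then show False using nonbounded[OF n] by blast
  qed
  have DeltaEq: "Delta T B F \<tau> x = T \<tau> x + scaleC (F x) s" for x
    unfolding Delta_def SopLin ..
  have bF: "bounded_clin F" by (rule F)
  have Fa: "F (x + y) = F x + F y" for x y using bounded_clin_add[OF F] .
  have Fs: "F (scaleC c x) = c * F x" for c x using bounded_clin_scaleC[OF F] by simp
  have Fd: "F (x - y) = F x - F y" for x y using bounded_clin_diff[OF F] .
  have Ta: "T \<tau> (x + y) = T \<tau> x + T \<tau> y" for x y using bounded_clin_add[OF bTt] .
  have Ts: "T \<tau> (scaleC c x) = scaleC c (T \<tau> x)" for c x using bounded_clin_scaleC[OF bTt] .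
  have Td: "T \<tau> (x - y) = T \<tau> x - T \<tau> y" for x y using bounded_clin_diff[OF bTt] .
  have zT: "scaleC z (phi j) - T \<tau> (phi j) = scaleC (z - \<mu> j) (phi j)" for z j
    using Tphi by (simp add: scaleC_diff_left)
  have zTs: "scaleC z (scaleC c (phi j)) - T \<tau> (scaleC c (phi j)) = scaleC ((z - \<mu> j) * c) (phi j)" for z c j
  proof -
    have "scaleC z (scaleC c (phi j)) - T \<tau> (scaleC c (phi j)) = scaleC c (scaleC z (phi j) - T \<tau> (phi j))"
      by (simp add: Ts scaleC_diff_right scaleC_scaleC mult.commute)
    also have "\<dots> = scaleC ((z - \<mu> j) * c) (phi j)" by (simp add: zT scaleC_scaleC mult.commute)
    finally show ?thesis .
  qed
  define P where "P = {m. 0 < Re (lam m)}"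
  have finP: "finite P" using fin by (simp add: P_def)
  show ?thesis
  proof
    fix z assume "z \<in> {z. 1 < cmod z}"
    then have z1: "1 < cmod z" by simp
    have musmall: "cmod (\<mu> m) \<le> 1" if "m \<notin> P" for m
      using that tau by (simp add: \<mu>_def P_def mult_nonpos_nonneg)
    have mudist: "cmod z - 1 \<le> cmod (z - \<mu> m)" if "m \<notin> P" for m
      using musmall[OF that] norm_triangle_ineq2[of z "\<mu> m"] by linarith
    define C where "C = 1 / (cmod z - 1) + (\<Sum>m\<in>P. 1 / cmod (z - \<mu> m))"
    have sumnn: "0 \<le> (\<Sum>m\<in>P. 1 / cmod (z - \<mu> m))" by (rule sum_nonneg) simp
    have C0: "0 \<le> C" using z1 sumnn by (simp add: C_def)
    have dbound: "cmod (1 / (z - \<mu> m)) \<le> C" if "\<mu> m \<noteq> z" for m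
    proof (cases "m \<in> P")
      case True
      have "cmod (1 / (z - \<mu> m)) = 1 / cmod (z - \<mu> m)" by (simp add: norm_divide)
      also have "\<dots> \<le> (\<Sum>m\<in>P. 1 / cmod (z - \<mu> m))"
        by (rule member_le_sum[OF True _ finP]) simp
      also have "\<dots> \<le> C" using z1 by (simp add: C_def)
      finally show ?thesis .
    next
      case False
      have "cmod (1 / (z - \<mu> m)) = 1 / cmod (z - \<mu> m)" by (simp add: norm_divide)
      also have "\<dots> \<le> 1 / (cmod z - 1)"
      proof -
        have pos: "0 < cmod z - 1" using z1 by simp
        have pos2: "0 < cmod (z - \<mu> m)" using pos mudist[OF False] by linarith
        show ?thesis using mudist[OF False] pos pos2 by (intro divide_left_mono) (auto intro: mult_pos_pos)
      qed
      also have "\<dots> \<le> C" using sumnn by (simp add: C_def)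
      finally show ?thesis .
    qed
    obtain K where K: "K > 0" "\<forall>C d. 0 \<le> C \<longrightarrow> (\<forall>n. cmod (d n) \<le> C) \<longrightarrow>
     (\<exists>g. bounded_clin g \<and> (\<forall>j. g (phi j) = scaleC (d j) (phi j)) \<and> (\<forall>x. norm (g x) \<le> K * C * norm x))"
      using rb_diag[OF rb] by blast
    show "z \<in> resolvent_set (Delta T B F \<tau>)"
    proof (cases "\<exists>n. \<mu> n = z")
      case False
      define d where "d m = 1 / (z - \<mu> m)" for m
      have "\<forall>m. cmod (d m) \<le> C" using dbound False by (simp add: d_def)
      then obtain Q where Q: "bounded_clin Q" "\<forall>j. Q (phi j) = scaleC (d j) (phi j)"
        using K(2) C0 by blast
      have Qa: "Q (x + y) = Q x + Q y" for x y using bounded_clin_add[OF Q(1)] .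
      have Qs: "Q (scaleC c x) = scaleC c (Q x)" for c x using bounded_clin_scaleC[OF Q(1)] .
      have Qd: "Q (x - y) = Q x - Q y" for x y using bounded_clin_diff[OF Q(1)] .
      have dz: "(z - \<mu> j) * d j = 1" for j
      proof -
        have "z - \<mu> j \<noteq> 0" using False by auto
        then show ?thesis by (simp add: d_def)
      qed
      have I1f: "(\<lambda>x. scaleC z (Q x) - T \<tau> (Q x)) = (\<lambda>x. x)"
      proof (rule dense_eq_phi[OF rb])
        show "bounded_clin (\<lambda>x. scaleC z (Q x) - T \<tau> (Q x))"
          by (intro bounded_clin_minus bounded_clin_scale bounded_clin_compose[OF bTt] Q(1))
        show "bounded_clin (\<lambda>x::'a. x)" by (rule bounded_clin_id)
        show "\<forall>j. scaleC z (Q (phi j)) - T \<tau> (Q (phi j)) = phi j"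
        proof
          fix j
          have "scaleC z (Q (phi j)) - T \<tau> (Q (phi j)) = scaleC ((z - \<mu> j) * d j) (phi j)"
            using Q(2) zTs by simp
          then show "scaleC z (Q (phi j)) - T \<tau> (Q (phi j)) = phi j" using dz by (simp add: scaleC_one)
        qed
      qed
      have I1: "scaleC z (Q x) - T \<tau> (Q x) = x" for x using fun_cong[OF I1f] by simp
      have I2f: "(\<lambda>x. Q (scaleC z x - T \<tau> x)) = (\<lambda>x. x)"
      proof (rule dense_eq_phi[OF rb])
        show "bounded_clin (\<lambda>x. Q (scaleC z x - T \<tau> x))"
          by (intro bounded_clin_compose[OF Q(1)] bounded_clin_minus bounded_clin_scale bTt bounded_clin_id)
        show "bounded_clin (\<lambda>x::'a. x)" by (rule bounded_clin_id)
        show "\<forall>j. Q (scaleC z (phi j) - T \<tau> (phi j)) = phi j"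
        proof
          fix j
          have "Q (scaleC z (phi j) - T \<tau> (phi j)) = scaleC ((z - \<mu> j) * d j) (phi j)"
            using Q(2) Qs zT by (simp add: scaleC_scaleC)
          then show "Q (scaleC z (phi j) - T \<tau> (phi j)) = phi j" using dz by (simp add: scaleC_one)
        qed
      qed
      have I2: "Q (scaleC z x - T \<tau> x) = x" for x using fun_cong[OF I2f] by simp
      have res: "z \<in> resolvent_set (T \<tau>) \<and> resolvent z (T \<tau>) = Q"
        by (rule in_resolvent[OF I1 I2 Q(1)])
      define \<beta> where "\<beta> = F (Q s)"
      have \<beta>1: "\<beta> \<noteq> 1"
      proof
        assume "\<beta> = 1"
        then have "(\<lambda>u. F (resolvent z (T \<tau>) (Sop T B \<tau> u))) = (\<lambda>u. u)"
          using res by (simp add: SopLin Qs Fs \<beta>_def)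
        then show False using ii res z1 by blast
      qed
      define R where "R w = Q w + scaleC (F (Q w) / (1 - \<beta>)) (Q s)" for w
      have lr: "scaleC z (R w) - Delta T B F \<tau> (R w) = w" for w
      proof -
        define c where "c = F (Q w) / (1 - \<beta>)"
        have c: "c - F (Q w) - c * \<beta> = 0" using \<beta>1 by (simp add: c_def field_simps)
        have "scaleC z (R w) - T \<tau> (R w) = (scaleC z (Q w) - T \<tau> (Q w)) + scaleC c (scaleC z (Q s) - T \<tau> (Q s))"
          by (simp add: R_def c_def Ta Ts scaleC_add_right scaleC_diff_right scaleC_scaleC mult.commute)
        also have "\<dots> = w + scaleC c s" using I1 by simp
        finally have e1: "scaleC z (R w) - T \<tau> (R w) = w + scaleC c s" .
        have e2: "F (R w) = F (Q w) + c * \<beta>" by (simp add: R_def Fa Fs c_def \<beta>_def)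
        have "scaleC z (R w) - Delta T B F \<tau> (R w) = w + scaleC c s - scaleC (F (Q w) + c * \<beta>) s"
          using e1 e2 by (simp add: DeltaEq algebra_simps)
        also have "\<dots> = w + scaleC (c - F (Q w) - c * \<beta>) s"
          by (simp add: scaleC_diff_left scaleC_add_left algebra_simps)
        also have "\<dots> = w" using c by simp
        finally show ?thesis .
      qed
      have rl: "R (scaleC z y - Delta T B F \<tau> y) = y" for y
      proof -
        define w where "w = scaleC z y - Delta T B F \<tau> y"
        have w: "w = (scaleC z y - T \<tau> y) - scaleC (F y) s" by (simp add: w_def DeltaEq algebra_simps)
        have Qw: "Q w = y - scaleC (F y) (Q s)" unfolding w Qd[of "scaleC z y - T \<tau> y"] I2 Qs ..
        have FQw: "F (Q w) / (1 - \<beta>) = F y" using \<beta>1 by (simp add: Qw Fd Fs \<beta>_def field_simps)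
        have "R w = Q w + scaleC (F y) (Q s)" unfolding R_def FQw ..
        then show ?thesis unfolding w_def[symmetric] Qw by simp
      qed
      have bR: "bounded_clin R"
      proof -
        have "bounded_clin (\<lambda>w. F (Q w) / (1 - \<beta>))"
          using bounded_clin_scale[OF bounded_clin_compose[OF F Q(1)], of "inverse (1 - \<beta>)"]
          by (simp add: divide_inverse mult.commute)
        then have "bounded_clin (\<lambda>w. scaleC (F (Q w) / (1 - \<beta>)) (Q s))" by (rule bounded_clin_rank1)
        then show ?thesis unfolding R_def by (rule bounded_clin_plus[OF Q(1)])
      qed
      show ?thesis using in_resolvent[OF lr rl bR] by blast
    next
      case True
      then obtain n where n: "\<mu> n = z" by blast
      have nP: "0 < Re (lam n)"
      proof (rule ccontr)
        assume "\<not> 0 < Re (lam n)"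
        then have "n \<notin> P" by (simp add: P_def)
        then show False using musmall[of n] n z1 by simp
      qed
      have uniq: "m = n" if m: "\<mu> m = z" for m
      proof -
        have mP: "0 < Re (lam m)"
        proof (rule ccontr)
          assume "\<not> 0 < Re (lam m)"
          then have "m \<notin> P" by (simp add: P_def)
          then show False using musmall[of m] m z1 by simp
        qed
        have "exp (lam m * of_real \<tau>) = exp (lam n * of_real \<tau>)" using m n by (simp add: \<mu>_def)
        then obtain l :: int where l: "lam m * of_real \<tau> = lam n * of_real \<tau> + (of_int (2 * l) * pi) * \<i>"
          using exp_eq by blast
        have "complex_of_real \<tau> * (lam m - lam n) = 2 * of_int l * complex_of_real pi * \<i>"
          using l by (simp add: algebra_simps)
        then have "l = 0" using i mP nP by blast
        then have "lam m = lam n" using l tau by simp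
        then show ?thesis using injl by (simp add: inj_eq)
      qed
      define d where "d m = (if m = n then 0 else 1 / (z - \<mu> m))" for m
      have "\<forall>m. cmod (d m) \<le> C" using dbound uniq C0 by (auto simp: d_def)
      then obtain Q where Q: "bounded_clin Q" "\<forall>j. Q (phi j) = scaleC (d j) (phi j)"
        using K(2) C0 by blast
      have Qa: "Q (x + y) = Q x + Q y" for x y using bounded_clin_add[OF Q(1)] .
      have Qs: "Q (scaleC c x) = scaleC c (Q x)" for c x using bounded_clin_scaleC[OF Q(1)] .
      have Qd: "Q (x - y) = Q x - Q y" for x y using bounded_clin_diff[OF Q(1)] .
      have Pa: "\<psi> n (x + y) = \<psi> n x + \<psi> n y" for x y using bounded_clin_add[OF psib] .
      have Ps: "\<psi> n (scaleC c x) = c * \<psi> n x" for c x using bounded_clin_scaleC[OF psib] by simp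
      have Pd: "\<psi> n (x - y) = \<psi> n x - \<psi> n y" for x y using bounded_clin_diff[OF psib] .
      have dz: "scaleC ((z - \<mu> j) * d j) (phi j) = phi j - scaleC (\<psi> n (phi j)) (phi j)" for j
      proof (cases "j = n")
        case True
        then show ?thesis using n psiphi by (simp add: d_def scaleC_one)
      next
        case False
        then have "\<mu> j \<noteq> z" using uniq by blast
        then show ?thesis using False psiphi by (simp add: d_def scaleC_one)
      qed
      have dz2: "scaleC (\<psi> n (phi j)) (phi j) = scaleC (\<psi> n (phi j)) (phi n)" for j
        using psiphi by simp
      have rhsb: "bounded_clin (\<lambda>x. x - scaleC (\<psi> n x) (phi n))"
        by (intro bounded_clin_minus bounded_clin_id bounded_clin_rank1 psib)
      have J1f: "(\<lambda>x. Q (scaleC z x - T \<tau> x)) = (\<lambda>x. x - scaleC (\<psi> n x) (phi n))"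
      proof (rule dense_eq_phi[OF rb _ rhsb])
        show "bounded_clin (\<lambda>x. Q (scaleC z x - T \<tau> x))"
          by (intro bounded_clin_compose[OF Q(1)] bounded_clin_minus bounded_clin_scale bTt bounded_clin_id)
        show "\<forall>j. Q (scaleC z (phi j) - T \<tau> (phi j)) = phi j - scaleC (\<psi> n (phi j)) (phi n)"
        proof
          fix j
          have "Q (scaleC z (phi j) - T \<tau> (phi j)) = scaleC ((z - \<mu> j) * d j) (phi j)"
            using Q(2) Qs zT by (simp add: scaleC_scaleC)
          then show "Q (scaleC z (phi j) - T \<tau> (phi j)) = phi j - scaleC (\<psi> n (phi j)) (phi n)"
            using dz dz2 by simp
        qed
      qed
      have J1: "Q (scaleC z x - T \<tau> x) = x - scaleC (\<psi> n x) (phi n)" for x using fun_cong[OF J1f] by simp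
      have J2f: "(\<lambda>x. scaleC z (Q x) - T \<tau> (Q x)) = (\<lambda>x. x - scaleC (\<psi> n x) (phi n))"
      proof (rule dense_eq_phi[OF rb _ rhsb])
        show "bounded_clin (\<lambda>x. scaleC z (Q x) - T \<tau> (Q x))"
          by (intro bounded_clin_minus bounded_clin_scale bounded_clin_compose[OF bTt] Q(1))
        show "\<forall>j. scaleC z (Q (phi j)) - T \<tau> (Q (phi j)) = phi j - scaleC (\<psi> n (phi j)) (phi n)"
        proof
          fix j
          have "scaleC z (Q (phi j)) - T \<tau> (Q (phi j)) = scaleC ((z - \<mu> j) * d j) (phi j)"
            using Q(2) zTs by simp
          then show "scaleC z (Q (phi j)) - T \<tau> (Q (phi j)) = phi j - scaleC (\<psi> n (phi j)) (phi n)"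
            using dz dz2 by simp
        qed
      qed
      have J2: "scaleC z (Q x) - T \<tau> (Q x) = x - scaleC (\<psi> n x) (phi n)" for x using fun_cong[OF J2f] by simp
      have J3: "\<psi> n (scaleC z x - T \<tau> x) = 0" for x
        using psiT[of \<tau> n x] tau n by (simp add: Pd Ps \<mu>_def)
      have J4: "scaleC z (phi n) - T \<tau> (phi n) = 0" using Tphi n by simp
      define \<beta> where "\<beta> = \<psi> n s"
      have \<beta>0: "\<beta> \<noteq> 0"
      proof -
        have ln: "lam n \<noteq> 0" using nP by auto
        have h: "cmod (exp (lam n * of_real \<tau>)) > 1" using nP tau by simp
        have "exp (lam n * of_real \<tau>) \<noteq> 1" using h by (metis norm_one less_irrefl)
        then have "exp (lam n * of_real \<tau>) - 1 \<noteq> 0" by simp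
        then show ?thesis using psis[OF ln] C2[OF nP] ln by (simp add: \<beta>_def)
      qed
      define \<gamma> where "\<gamma> = F (phi n)"
      have \<gamma>0: "\<gamma> \<noteq> 0" using C1[OF nP] by (simp add: \<gamma>_def)
      define \<kappa> where "\<kappa> w = - \<psi> n w / \<beta>" for w
      define y' where "y' w = Q (w + scaleC (\<kappa> w) s)" for w
      define R where "R w = y' w + scaleC ((\<kappa> w - F (y' w)) / \<gamma>) (phi n)" for w
      have lr: "scaleC z (R w) - Delta T B F \<tau> (R w) = w" for w
      proof -
        define c where "c = (\<kappa> w - F (y' w)) / \<gamma>"
        have k\<beta>: "\<psi> n w + \<kappa> w * \<beta> = 0" using \<beta>0 by (simp add: \<kappa>_def)
        have "scaleC z (R w) - T \<tau> (R w) = (scaleC z (y' w) - T \<tau> (y' w)) + scaleC c (scaleC z (phi n) - T \<tau> (phi n))"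
          by (simp add: R_def c_def Ta Ts scaleC_add_right scaleC_diff_right scaleC_scaleC mult.commute)
        also have "\<dots> = (w + scaleC (\<kappa> w) s) - scaleC (\<psi> n w + \<kappa> w * \<beta>) (phi n)"
          using J2 J4 by (simp add: y'_def Pa Ps \<beta>_def)
        also have "\<dots> = w + scaleC (\<kappa> w) s" using k\<beta> by simp
        finally have e1: "scaleC z (R w) - T \<tau> (R w) = w + scaleC (\<kappa> w) s" .
        have e2: "F (R w) = \<kappa> w" using \<gamma>0 by (simp add: R_def Fa Fs \<gamma>_def)
        show ?thesis using e1 e2 by (simp add: DeltaEq algebra_simps)
      qed
      have rl: "R (scaleC z y - Delta T B F \<tau> y) = y" for y
      proof -
        define w where "w = scaleC z y - Delta T B F \<tau> y"
        have w: "w = (scaleC z y - T \<tau> y) - scaleC (F y) s" by (simp add: w_def DeltaEq algebra_simps)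
        have kw: "\<kappa> w = F y" using \<beta>0 J3[of y] by (simp add: \<kappa>_def w Pd Ps \<beta>_def)
        have ws: "w + scaleC (\<kappa> w) s = scaleC z y - T \<tau> y" using kw w by simp
        have yw: "y' w = y - scaleC (\<psi> n y) (phi n)" by (simp only: y'_def ws J1)
        have cw: "(\<kappa> w - F (y' w)) / \<gamma> = \<psi> n y" using \<gamma>0 by (simp add: kw yw Fd Fs \<gamma>_def)
        have "R w = y' w + scaleC (\<psi> n y) (phi n)" unfolding R_def cw ..
        then show ?thesis unfolding w_def[symmetric] yw by simp
      qed
      have bR: "bounded_clin R"
      proof -
        have bk: "bounded_clin \<kappa>"
          using bounded_clin_scale[OF psib, of "- inverse \<beta>"] unfolding \<kappa>_def
          by (simp add: divide_inverse mult.commute)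
        have by': "bounded_clin y'"
          unfolding y'_def by (intro bounded_clin_compose[OF Q(1)] bounded_clin_plus bounded_clin_id bounded_clin_rank1 bk)
        have "bounded_clin (\<lambda>w. (\<kappa> w - F (y' w)) / \<gamma>)"
          using bounded_clin_scale[OF bounded_clin_minus[OF bk bounded_clin_compose[OF F by']], of "inverse \<gamma>"]
          by (simp add: divide_inverse mult.commute)
        then have "bounded_clin (\<lambda>w. scaleC ((\<kappa> w - F (y' w)) / \<gamma>) (phi n))" by (rule bounded_clin_rank1)
        then show ?thesis unfolding R_def by (rule bounded_clin_plus[OF by'])
      qed
      show ?thesis using in_resolvent[OF lr rl bR] by blast
    qed
  qed
qed

end
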